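(* For $m\ge0$ there are bijections $$B_m(\mathbb C)\backslash\mathrm{Her}_m(\mathbb C)\simeq B_m(\mathbb R)\backslash\mathrm{Sym}_m(\mathbb R)\simeq\coprod_{\substack{p,q\ge0\\0\le p+q\le m}}\ \coprod_{J\in\binom{[m]}{p+q}}\Gamma(p,q).$$
   Context: $B_m(\mathbb C)$ (resp. $B_m(\mathbb R)$) is the group of invertible upper triangular complex (resp. real) $m\times m$ matrices, acting on the space $\mathrm{Her}_m(\mathbb C)$ of Hermitian matrices by $b\cdot z=bzb^*$ (resp. on the real symmetric matrices $\mathrm{Sym}_m(\mathbb R)$ by $b\cdot z=bzb^t$). $\binom{[m]}{k}$ is the set of $k$-element subsets of $\{1,\dots,m\}$ (these indices only record multiplicities). $\Gamma(p,q)$ is the set of maps $\gamma:\{1,\dots,p+q\}\to\{1,\dots,p+q\}\cup\{+,-\}$ such that $\gamma(i)=j\in\{1,\dots,p+q\}$ implies $i\ne j$ and $\gamma(j)=i$, and $\#\gamma^{-1}(+)-\#\gamma^{-1}(-)=p-q$; $\Gamma(0,0)$ consists of the empty map. *)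

theory Defs
  imports "Jordan_Normal_Form.Matrix" "HOL-Library.FuncSet"
begin

definition adj_mat :: "complex mat \<Rightarrow> complex mat" where
  "adj_mat b = mat (dim_col b) (dim_row b) (\<lambda>(i,j). cnj (b $$ (j,i)))"

definition Her :: "nat \<Rightarrow> complex mat set" where
  "Her m = {z \<in> carrier_mat m m. adj_mat z = z}"

definition Sym :: "nat \<Rightarrow> real mat set" where
  "Sym m = {z \<in> carrier_mat m m. transpose_mat z = z}"

definition Borel :: "nat \<Rightarrow> 'a::semiring_1 mat set" where
  "Borel m = {b \<in> carrier_mat m m. upper_triangular b \<and> invertible_mat b}"

definition orbit_rel_C :: "nat \<Rightarrow> complex mat rel" where
  "orbit_rel_C m = {(z, w). z \<in> Her m \<and> w \<in> Her m \<and>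
      (\<exists>b \<in> (Borel m :: complex mat set). w = b * z * adj_mat b)}"

definition orbit_rel_R :: "nat \<Rightarrow> real mat rel" where
  "orbit_rel_R m = {(z, w). z \<in> Sym m \<and> w \<in> Sym m \<and>
      (\<exists>b \<in> (Borel m :: real mat set). w = b * z * transpose_mat b)}"

datatype gval = Idx nat | Pl | Mi

definition Gamma :: "nat \<Rightarrow> nat \<Rightarrow> (nat \<Rightarrow> gval) set" where
  "Gamma p q = {\<gamma> \<in> {1..p+q} \<rightarrow>\<^sub>E (Idx ` {1..p+q} \<union> {Pl, Mi}).
      (\<forall>i \<in> {1..p+q}. \<forall>j. \<gamma> i = Idx j \<longrightarrow> i \<noteq> j \<and> \<gamma> j = Idx i) \<and>
      int (card {i \<in> {1..p+q}. \<gamma> i = Pl}) - int (card {i \<in> {1..p+q}. \<gamma> i = Mi})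
        = int p - int q}"

text \<open>The disjoint union over p,q \<ge> 0 with p+q \<le> m and J a (p+q)-subset of [m]
  of Gamma(p,q), as a set of tagged tuples (p,q,J,gamma).\<close>
definition Coprod :: "nat \<Rightarrow> (nat \<times> nat \<times> nat set \<times> (nat \<Rightarrow> gval)) set" where
  "Coprod m = {(p, q, J, \<gamma>). p + q \<le> m \<and> J \<subseteq> {1..m} \<and> card J = p + q \<and> \<gamma> \<in> Gamma p q}"

end

theory Submission
  imports "Jordan_Normal_Form.Determinant" Defs
begin

lemma mult_idx:
  assumes "A \<in> carrier_mat n k" "B \<in> carrier_mat k p" "i < n" "j < p"
  shows "(A * B) $$ (i,j) = (\<Sum>r<k. A $$ (i,r) * B $$ (r,j))"
  using assms by (auto simp: scalar_prod_def atLeast0LessThan intro!: sum.cong)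

lemma sum_single:
  assumes "finite S" "p \<in> S" "\<And>q. q \<in> S \<Longrightarrow> q \<noteq> p \<Longrightarrow> f q = 0"
  shows "sum f S = f p"
proof -
  have "sum f S = f p + sum f (S - {p})" using assms by (simp add: sum.remove)
  also have "sum f (S - {p}) = 0" using assms by (intro sum.neutral) auto
  finally show ?thesis by simp
qed

locale cjf =
  fixes cj :: "'a::field \<Rightarrow> 'a"
  assumes cj_add: "cj (x + y) = cj x + cj y"
    and cj_mult: "cj (x * y) = cj x * cj y"
    and cj_one: "cj 1 = 1"
    and cj_cj: "cj (cj x) = x"
    and two_nz: "(2::'a) \<noteq> 0"
    and pos: "x * cj x \<noteq> -1"
    and norm: "cj a = a \<Longrightarrow> a \<noteq> 0 \<Longrightarrow> \<exists>x. x * cj x * a = 1 \<or> x * cj x * a = -1"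
begin

lemma cj_zero[simp]: "cj 0 = 0"
  using cj_add[of 0 0] by (metis add_0 add_cancel_right_right)

lemma cj_uminus[simp]: "cj (- x) = - cj x"
  using cj_add[of x "-x"] by (metis add.commute eq_neg_iff_add_eq_0 cj_zero add.right_inverse)

lemma cj_diff: "cj (x - y) = cj x - cj y"
  using cj_add[of x "-y"] by simp

lemma cj_eq0[simp]: "cj x = 0 \<longleftrightarrow> x = 0"
  by (metis cj_cj cj_zero)

lemma cj_inj: "cj x = cj y \<longleftrightarrow> x = y"
  by (metis cj_cj)

lemma cj_inverse: "cj (inverse x) = inverse (cj x)"
proof (cases "x = 0")
  case False
  have "cj x * cj (inverse x) = 1" using cj_mult[of x "inverse x"] False by (simp add: cj_one)
  then show ?thesis using inverse_unique by metis
qed simp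

lemma cj_divide: "cj (x / y) = cj x / cj y"
  by (simp add: divide_inverse cj_mult cj_inverse)

lemma cj_two: "cj 2 = 2"
  using cj_add[of 1 1] by (simp add: cj_one)

lemma cj_sum: "cj (sum f S) = (\<Sum>x\<in>S. cj (f x))"
  by (induction S rule: infinite_finite_induct) (auto simp: cj_add)

lemmas cj_simps[simp] = cj_add cj_mult cj_one cj_cj cj_sum cj_diff cj_divide cj_two

definition adj :: "'a mat \<Rightarrow> 'a mat" where
  "adj b = mat (dim_col b) (dim_row b) (\<lambda>(i,j). cj (b $$ (j,i)))"

lemma adj_carrier[simp]: "A \<in> carrier_mat n m \<Longrightarrow> adj A \<in> carrier_mat m n"
  by (auto simp: adj_def)

lemma adj_dim[simp]: "dim_row (adj A) = dim_col A" "dim_col (adj A) = dim_row A"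
  by (auto simp: adj_def)

lemma adj_idx[simp]: "i < dim_col A \<Longrightarrow> j < dim_row A \<Longrightarrow> adj A $$ (i,j) = cj (A $$ (j,i))"
  by (auto simp: adj_def)

lemma adj_adj[simp]: "adj (adj A) = A"
  by (rule eq_matI) auto

lemma adj_one[simp]: "adj (1\<^sub>m n) = 1\<^sub>m n"
  by (rule eq_matI) auto

lemma adj_mult:
  assumes "A \<in> carrier_mat n k" "B \<in> carrier_mat k p"
  shows "adj (A * B) = adj B * adj A"
proof (rule eq_matI)
  fix i j assume ij: "i < dim_row (adj B * adj A)" "j < dim_col (adj B * adj A)"
  then have ij': "i < p" "j < n" using assms by auto
  have "adj (A * B) $$ (i,j) = cj ((A*B) $$ (j,i))" using ij' assms by simp
  also have "\<dots> = (\<Sum>r<k. cj (A $$ (j,r)) * cj (B $$ (r,i)))"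
    using ij' assms by (subst mult_idx[OF assms(1,2)]) auto
  also have "\<dots> = (adj B * adj A) $$ (i,j)"
    using ij' assms by (subst mult_idx[of _ p k _ n]) (auto simp: mult.commute intro!: sum.cong)
  finally show "adj (A * B) $$ (i,j) = (adj B * adj A) $$ (i,j)" .
qed (use assms in auto)

definition H :: "nat \<Rightarrow> 'a mat set" where
  "H m = {z \<in> carrier_mat m m. adj z = z}"

lemma H_entry: "z \<in> H m \<Longrightarrow> i < m \<Longrightarrow> j < m \<Longrightarrow> z $$ (i,j) = cj (z $$ (j,i))"
  unfolding H_def by (metis (mono_tags, lifting) adj_idx carrier_matD mem_Collect_eq)

lemma H_cong:
  assumes "z \<in> H m" "b \<in> carrier_mat m m"
  shows "b * z * adj b \<in> H m"
proof -
  have z: "z \<in> carrier_mat m m" "adj z = z" using assms unfolding H_def by auto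
  have "adj (b * z * adj b) = adj (adj b) * adj (b * z)"
    using z assms by (intro adj_mult) auto
  also have "\<dots> = b * (adj z * adj b)" using z assms by (simp add: adj_mult)
  also have "\<dots> = b * z * adj b" using z assms by (simp add: assoc_mult_mat[of _ m m _ m _ m])
  finally show ?thesis using z assms unfolding H_def by auto
qed

end

definition UT :: "nat \<Rightarrow> 'a::field mat \<Rightarrow> bool" where
  "UT m b \<longleftrightarrow> b \<in> carrier_mat m m \<and> (\<forall>i<m. \<forall>j<i. b $$ (i,j) = 0)"

definition UTD :: "nat \<Rightarrow> 'a::field mat \<Rightarrow> bool" where
  "UTD m b \<longleftrightarrow> UT m b \<and> (\<forall>i<m. b $$ (i,i) \<noteq> 0)"

lemma UT_mult_entry:
  assumes "UT m a" "UT m b" "i < m" "j < m"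
  shows "(a * b) $$ (i,j) = (if j < i then 0 else if i = j then a $$ (i,i) * b $$ (i,i)
     else (a * b) $$ (i,j))"
proof -
  have c: "a \<in> carrier_mat m m" "b \<in> carrier_mat m m" using assms unfolding UT_def by auto
  have e: "(a * b) $$ (i,j) = (\<Sum>r<m. a $$ (i,r) * b $$ (r,j))"
    by (rule mult_idx[OF c]) (use assms in auto)
  show ?thesis
  proof (cases "j < i")
    case True
    have "(\<Sum>r<m. a $$ (i,r) * b $$ (r,j)) = 0"
    proof (rule sum.neutral, intro ballI)
      fix r assume "r \<in> {..<m}"
      show "a $$ (i,r) * b $$ (r,j) = 0"
      proof (cases "r < i")
        case True then show ?thesis using assms unfolding UT_def by auto
      next
        case False then have "j < r" using \<open>j < i\<close> by auto
        then show ?thesis using assms \<open>r \<in> {..<m}\<close> unfolding UT_def by auto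
      qed
    qed
    then show ?thesis using e True by simp
  next
    case False
    show ?thesis
    proof (cases "i = j")
      case True
      have "(\<Sum>r<m. a $$ (i,r) * b $$ (r,j)) = a $$ (i,i) * b $$ (i,j)"
      proof (rule sum_single)
        fix r assume "r \<in> {..<m}" "r \<noteq> i"
        then show "a $$ (i,r) * b $$ (r,j) = 0"
          using assms True unfolding UT_def by (cases "r < i") auto
      qed (use assms in auto)
      then show ?thesis using e True by simp
    qed (use False in auto)
  qed
qed

lemma UT_mult: "UT m a \<Longrightarrow> UT m b \<Longrightarrow> UT m (a * b)"
  unfolding UT_def[of m "a*b"] using UT_mult_entry[of m a b]
  by (auto simp: UT_def)

lemma UTD_mult: assumes "UTD m a" "UTD m b" shows "UTD m (a * b)"
proof -
  have u: "UT m a" "UT m b" using assms unfolding UTD_def by auto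
  have "(a * b) $$ (i,i) \<noteq> 0" if "i < m" for i
    using UT_mult_entry[OF u that that] assms that unfolding UTD_def by simp
  then show ?thesis using UT_mult[OF u] unfolding UTD_def by auto
qed

lemma UTD_one: "UTD m (1\<^sub>m m)"
  by (auto simp: UTD_def UT_def)

lemma maxarg:
  fixes b :: "'a::field mat"
  assumes "UTD n b" "\<exists>s<n. w s \<noteq> 0"
  shows "\<exists>r<n. w r \<noteq> 0 \<and> (\<Sum>s<n. b $$ (r,s) * w s) \<noteq> 0 \<and> (\<forall>s. r < s \<and> s < n \<longrightarrow> w s = 0)"
proof -
  define S where "S = {s. s < n \<and> w s \<noteq> 0}"
  have fin: "finite S" "S \<noteq> {}" using assms unfolding S_def by auto
  define r where "r = Max S"
  have r: "r \<in> S" "\<And>s. s \<in> S \<Longrightarrow> s \<le> r" using fin unfolding r_def by auto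
  have rn: "r < n" "w r \<noteq> 0" using r unfolding S_def by auto
  have big: "\<And>s. r < s \<Longrightarrow> s < n \<Longrightarrow> w s = 0" using r(2) unfolding S_def by force
  have "(\<Sum>s<n. b $$ (r,s) * w s) = b $$ (r,r) * w r"
  proof (rule sum_single)
    fix s assume "s \<in> {..<n}" "s \<noteq> r"
    then show "b $$ (r,s) * w s = 0"
      using assms(1) big rn unfolding UTD_def UT_def by (cases "s < r") auto
  qed (use rn in auto)
  then show ?thesis using rn big assms(1) unfolding UTD_def by auto
qed

lemma Borel_UTD: "(b \<in> (Borel m :: 'a::field mat set)) \<longleftrightarrow> UTD m b"
proof
  assume "b \<in> Borel m"
  then have b: "b \<in> carrier_mat m m" "upper_triangular b" "invertible_mat b"
    unfolding Borel_def by auto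
  then obtain B where B: "b * B = 1\<^sub>m m" "B * b = 1\<^sub>m (dim_row B)"
    unfolding invertible_mat_def inverts_mat_def by auto
  have "dim_col B = m" using B(1) by (metis index_mult_mat(3) index_one_mat(3))
  moreover have "dim_row B = m" using B(2) b(1)
    by (metis carrier_matD(2) index_mult_mat(3) index_one_mat(3))
  ultimately have Bc: "B \<in> carrier_mat m m" by auto
  have "det b * det B = 1" using det_mult[OF b(1) Bc] B(1) by simp
  then have "det b \<noteq> 0" by auto
  then have "(\<Prod>i = 0..<m. b $$ (i,i)) \<noteq> 0"
    using det_upper_triangular[OF b(2,1)] b(1) by (simp add: prod_list_diag_prod)
  then have "\<forall>i<m. b $$ (i,i) \<noteq> 0" by auto
  then show "UTD m b" using b unfolding UTD_def UT_def upper_triangular_def by auto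
next
  assume u: "UTD m b"
  then have b: "b \<in> carrier_mat m m" "upper_triangular b"
    unfolding UTD_def UT_def upper_triangular_def by auto
  have "det b = (\<Prod>i = 0..<m. b $$ (i,i))"
    using det_upper_triangular[OF b(2,1)] b(1) by (simp add: prod_list_diag_prod)
  then have d: "det b \<noteq> 0" using u unfolding UTD_def by auto
  define B where "B = (1 / det b) \<cdot>\<^sub>m Determinant.adj_mat b"
  have a: "Determinant.adj_mat b \<in> carrier_mat m m" using adj_mat(1)[OF b(1)] .
  have "b * B = 1\<^sub>m m" unfolding B_def using d
    by (simp add: mult_smult_distrib[OF b(1) a] adj_mat(2)[OF b(1)]) (intro eq_matI, auto)
  moreover have "B * b = 1\<^sub>m m" unfolding B_def using d
    by (simp add: mult_smult_assoc_mat[OF a b(1)] adj_mat(3)[OF b(1)]) (intro eq_matI, auto)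
  ultimately have "invertible_mat b" using b(1) a
    unfolding invertible_mat_def inverts_mat_def B_def square_mat.simps by auto
  then show "b \<in> Borel m" using b unfolding Borel_def by auto
qed

lemma UTD_inv:
  fixes b :: "'a::field mat"
  assumes "UTD m b"
  shows "\<exists>B. UTD m B \<and> b * B = 1\<^sub>m m \<and> B * b = 1\<^sub>m m"
proof -
  have b: "b \<in> carrier_mat m m" "invertible_mat b" using assms Borel_UTD[of b m]
    unfolding Borel_def by auto
  then obtain B where B: "b * B = 1\<^sub>m m" "B * b = 1\<^sub>m (dim_row B)"
    unfolding invertible_mat_def inverts_mat_def by auto
  have "dim_col B = m" using B(1) by (metis index_mult_mat(3) index_one_mat(3))
  moreover have "dim_row B = m" using B(2) b(1)
    by (metis carrier_matD(2) index_mult_mat(3) index_one_mat(3))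
  ultimately have Bc: "B \<in> carrier_mat m m" by auto
  have low: "B $$ (i,j) = 0" if ij: "i < m" "j < i" for i j
  proof (rule ccontr)
    assume nz: "B $$ (i,j) \<noteq> 0"
    obtain r where r: "r < m" "B $$ (r,j) \<noteq> 0" "(\<Sum>s<m. b $$ (r,s) * B $$ (s,j)) \<noteq> 0"
      "\<forall>s. r < s \<and> s < m \<longrightarrow> B $$ (s,j) = 0"
      using maxarg[OF assms, of "\<lambda>s. B $$ (s,j)"] nz ij by auto
    have "i \<le> r" using r(4) nz ij by (meson not_le_imp_less)
    then have "j < r" using ij by auto
    have "(b * B) $$ (r,j) = (\<Sum>s<m. b $$ (r,s) * B $$ (s,j))"
      using mult_idx[OF b(1) Bc] r(1) ij by auto
    then show False using B(1) r(1,3) \<open>j < r\<close> ij by auto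
  qed
  have UTB: "UT m B" using Bc low unfolding UT_def by auto
  have "b $$ (i,i) * B $$ (i,i) = 1" if "i < m" for i
    using UT_mult_entry[OF _ UTB that that, of b] assms B(1) that unfolding UTD_def by auto
  then have "UTD m B" using UTB unfolding UTD_def by (metis mult_zero_right zero_neq_one)
  then show ?thesis using B Bc by auto
qed

definition em :: "nat \<Rightarrow> nat \<Rightarrow> nat \<Rightarrow> 'a::field \<Rightarrow> 'a mat" where
  "em m k l a = mat m m (\<lambda>(i,j). (if i = j then 1 else 0) + (if i = k \<and> j = l then a else 0))"

lemma em_carrier[simp]: "em m k l a \<in> carrier_mat m m"
  by (simp add: em_def)

lemma em_UTD: "k \<le> l \<Longrightarrow> l < m \<Longrightarrow> (k = l \<Longrightarrow> 1 + a \<noteq> 0) \<Longrightarrow> UTD m (em m k l a)"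
  unfolding UTD_def UT_def em_def by auto

definition low :: "nat \<Rightarrow> 'a::field mat \<Rightarrow> 'a mat" where
  "low m z = mat m m (\<lambda>(i,j). z $$ (Suc i, Suc j))"

lemma low_carrier[simp]: "low m z \<in> carrier_mat m m" by (simp add: low_def)

lemma low_dim[simp]: "dim_row (low m z) = m" "dim_col (low m z) = m" by (auto simp: low_def)

lemma low_idx[simp]: "i < m \<Longrightarrow> j < m \<Longrightarrow> low m z $$ (i,j) = z $$ (Suc i, Suc j)"
  by (simp add: low_def)

lemma low_UTD: "UTD (Suc m) b \<Longrightarrow> UTD m (low m b)"
  unfolding UTD_def UT_def by auto

context cjf
begin

definition rel :: "nat \<Rightarrow> 'a mat rel" where
  "rel m = {(z, w). z \<in> H m \<and> w \<in> H m \<and> (\<exists>b. UTD m b \<and> w = b * z * adj b)}"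

lemma cong_comp:
  assumes "b \<in> carrier_mat m m" "c \<in> carrier_mat m m" "z \<in> carrier_mat m m"
  shows "c * (b * z * adj b) * adj c = (c * b) * z * adj (c * b)"
proof -
  have a: "adj b \<in> carrier_mat m m" "adj c \<in> carrier_mat m m" using assms by auto
  have "c * (b * z * adj b) * adj c = c * (b * z * adj b * adj c)"
    using assms a by (intro assoc_mult_mat) auto
  also have "b * z * adj b * adj c = (b * z) * (adj b * adj c)"
    using assms a by (intro assoc_mult_mat) auto
  also have "c * ((b * z) * (adj b * adj c)) = (c * (b * z)) * (adj b * adj c)"
    using assms a by (intro assoc_mult_mat[symmetric]) auto
  also have "c * (b * z) = (c * b) * z"
    using assms a by (intro assoc_mult_mat[symmetric]) auto
  also have "adj b * adj c = adj (c * b)" using adj_mult[OF assms(2,1)] by simp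
  finally show ?thesis .
qed

lemma rel_equiv: "equiv (H m) (rel m)"
proof (rule equivI)
  show "rel m \<subseteq> H m \<times> H m" unfolding rel_def by auto
  show "refl_on (H m) (rel m)"
  proof (rule refl_onI)
    fix x assume "x \<in> H m"
    then show "(x, x) \<in> rel m" unfolding rel_def
      by (auto simp: H_def intro!: exI[of _ "1\<^sub>m m"] UTD_one)
  qed
  show "sym (rel m)"
  proof (rule symI)
    fix z w assume "(z, w) \<in> rel m"
    then obtain b where zw: "z \<in> H m" "w \<in> H m" "UTD m b" "w = b * z * adj b"
      unfolding rel_def by auto
    obtain B where B: "UTD m B" "b * B = 1\<^sub>m m" "B * b = 1\<^sub>m m" using UTD_inv[OF zw(3)] by auto
    have c: "b \<in> carrier_mat m m" "B \<in> carrier_mat m m" "z \<in> carrier_mat m m"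
      using zw B unfolding UTD_def UT_def H_def by auto
    have "B * w * adj B = (B * b) * z * adj (B * b)" using cong_comp[OF c(1,2,3)] zw(4) by simp
    also have "\<dots> = z" using B(3) c by simp
    finally show "(w, z) \<in> rel m" using zw B unfolding rel_def by auto
  qed
  show "trans (rel m)"
  proof (rule transI)
    fix x y z assume "(x, y) \<in> rel m" "(y, z) \<in> rel m"
    then obtain b c where h: "x \<in> H m" "z \<in> H m" "UTD m b" "y = b * x * adj b"
       "UTD m c" "z = c * y * adj c"
      unfolding rel_def by auto
    have cc: "b \<in> carrier_mat m m" "c \<in> carrier_mat m m" "x \<in> carrier_mat m m"
      using h unfolding UTD_def UT_def H_def by auto
    have "z = (c * b) * x * adj (c * b)" using h(4,6) cong_comp[OF cc] by simp
    then show "(x, z) \<in> rel m" using h UTD_mult unfolding rel_def by blast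
  qed
qed


lemma cong_idx:
  assumes "b \<in> carrier_mat n n" "z \<in> carrier_mat n n" "i < n" "j < n"
  shows "(b * z * adj b) $$ (i,j) = (\<Sum>k<n. \<Sum>l<n. b $$ (i,k) * z $$ (k,l) * cj (b $$ (j,l)))"
proof -
  have bz: "b * z \<in> carrier_mat n n" using assms by auto
  have "(b * z * adj b) $$ (i,j) = (\<Sum>l<n. (b * z) $$ (i,l) * adj b $$ (l,j))"
    by (rule mult_idx[OF bz]) (use assms in auto)
  also have "\<dots> = (\<Sum>l<n. (\<Sum>k<n. b $$ (i,k) * z $$ (k,l)) * cj (b $$ (j,l)))"
    using assms by (intro sum.cong refl) (subst mult_idx[OF assms(1,2)], auto)
  also have "\<dots> = (\<Sum>l<n. \<Sum>k<n. b $$ (i,k) * z $$ (k,l) * cj (b $$ (j,l)))"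
    by (simp add: sum_distrib_right)
  also have "\<dots> = (\<Sum>k<n. \<Sum>l<n. b $$ (i,k) * z $$ (k,l) * cj (b $$ (j,l)))"
    by (rule sum.swap)
  finally show ?thesis .
qed

lemma em_cong:
  assumes z: "z \<in> carrier_mat m m" and kl: "k < m" "l < m" and ij: "i < m" "j < m"
  shows "(em m k l a * z * adj (em m k l a)) $$ (i,j) = z $$ (i,j) + (if i = k then a * z $$ (l,j) else 0)
     + (if j = k then cj a * z $$ (i,l) else 0) + (if i = k \<and> j = k then a * cj a * z $$ (l,l) else 0)"
proof -
  let ?E = "em m k l a"
  have L: "(?E * z) $$ (i',j') = z $$ (i',j') + (if i' = k then a * z $$ (l,j') else 0)"
    if "i' < m" "j' < m" for i' j'
  proof -
    have "(?E * z) $$ (i',j') = (\<Sum>r<m. ?E $$ (i',r) * z $$ (r,j'))"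
      by (rule mult_idx[OF em_carrier z]) (use that in auto)
    also have "\<dots> = (\<Sum>r<m. (if r = i' then z $$ (i',j') else 0) + (if r = l \<and> i' = k then a * z $$ (l,j') else 0))"
      using that by (intro sum.cong refl) (auto simp: em_def distrib_right)
    also have "\<dots> = z $$ (i',j') + (if i' = k then a * z $$ (l,j') else 0)"
      using that kl by (simp add: sum.distrib distrib_right)
    finally show ?thesis .
  qed
  have Ez: "?E * z \<in> carrier_mat m m" by (rule mult_carrier_mat[OF em_carrier z])
  have "(?E * z * adj ?E) $$ (i,j) = (\<Sum>r<m. (?E * z) $$ (i,r) * adj ?E $$ (r,j))"
    by (rule mult_idx[OF Ez]) (use ij in auto)
  also have "\<dots> = (\<Sum>r<m. (if r = j then (?E * z) $$ (i,j) else 0) + (if r = l \<and> j = k then (?E * z) $$ (i,l) * cj a else 0))"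
    using ij by (intro sum.cong refl) (auto simp: em_def distrib_left)
  also have "\<dots> = (?E * z) $$ (i,j) + (if j = k then (?E * z) $$ (i,l) * cj a else 0)"
    using ij kl by (simp add: sum.distrib)
  also have "\<dots> = z $$ (i,j) + (if i = k then a * z $$ (l,j) else 0)
     + (if j = k then cj a * z $$ (i,l) else 0) + (if i = k \<and> j = k then a * cj a * z $$ (l,l) else 0)"
    using ij kl by (auto simp: L algebra_simps)
  finally show ?thesis .
qed

lemma low_cong:
  assumes b: "UT (Suc m) b" and z: "z \<in> carrier_mat (Suc m) (Suc m)"
  shows "low m (b * z * adj b) = low m b * low m z * adj (low m b)"
proof (rule eq_matI)
  fix i j assume "i < dim_row (low m b * low m z * adj (low m b))" "j < dim_col (low m b * low m z * adj (low m b))"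
  then have ij: "i < m" "j < m" by auto
  have bc: "b \<in> carrier_mat (Suc m) (Suc m)" and b0: "\<And>i. i < Suc m \<Longrightarrow> 0 < i \<Longrightarrow> b $$ (i,0) = 0"
    using b unfolding UT_def by auto
  have "low m (b * z * adj b) $$ (i,j) = (b * z * adj b) $$ (Suc i, Suc j)" using ij by simp
  also have "\<dots> = (\<Sum>k<Suc m. \<Sum>l<Suc m. b $$ (Suc i,k) * z $$ (k,l) * cj (b $$ (Suc j,l)))"
    using cong_idx[OF bc z] ij by simp
  also have "\<dots> = (\<Sum>k<m. \<Sum>l<m. b $$ (Suc i,Suc k) * z $$ (Suc k,Suc l) * cj (b $$ (Suc j,Suc l)))"
    using ij b0 by (simp add: sum.lessThan_Suc_shift del: sum.lessThan_Suc)
  also have "\<dots> = (low m b * low m z * adj (low m b)) $$ (i,j)"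
    using cong_idx[OF low_carrier low_carrier ij] ij by simp
  finally show "low m (b * z * adj b) $$ (i,j) = (low m b * low m z * adj (low m b)) $$ (i,j)" .
qed (auto simp: low_def)

end

definition NFon :: "nat set \<Rightarrow> 'a::ring_1 mat \<Rightarrow> bool" where
  "NFon A N \<longleftrightarrow> (\<forall>i\<in>A. \<forall>j\<in>A. N $$ (i,j) \<in> {0, 1, -1} \<and> N $$ (i,j) = N $$ (j,i)
     \<and> (i \<noteq> j \<longrightarrow> N $$ (i,j) \<noteq> -1) \<and> (\<forall>k\<in>A. N $$ (i,j) \<noteq> 0 \<longrightarrow> N $$ (i,k) \<noteq> 0 \<longrightarrow> j = k))"

definition NF :: "nat \<Rightarrow> 'a::ring_1 mat \<Rightarrow> bool" where
  "NF m N \<longleftrightarrow> N \<in> carrier_mat m m \<and> NFon {..<m} N"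

lemma NF_low:
  assumes "NF (Suc m) N" shows "NF m (low m N)"
proof -
  have N: "NFon {..<Suc m} N" using assms unfolding NF_def by auto
  have Ni: "\<And>i j. i < Suc m \<Longrightarrow> j < Suc m \<Longrightarrow> N $$ (i,j) \<in> {0,1,-1} \<and> N $$ (i,j) = N $$ (j,i)
     \<and> (i \<noteq> j \<longrightarrow> N $$ (i,j) \<noteq> -1)"
    using N unfolding NFon_def by blast
  have Nu: "\<And>i j k. i < Suc m \<Longrightarrow> j < Suc m \<Longrightarrow> k < Suc m \<Longrightarrow> N $$ (i,j) \<noteq> 0 \<Longrightarrow> N $$ (i,k) \<noteq> 0 \<Longrightarrow> j = k"
    using N unfolding NFon_def by blast
  have "NFon {..<m} (low m N)" unfolding NFon_def
  proof (intro ballI conjI impI)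
    fix i j assume i: "i \<in> {..<m}" and j: "j \<in> {..<m}"
    show "low m N $$ (i, j) \<in> {0, 1, - 1}" "low m N $$ (i, j) = low m N $$ (j, i)"
      using Ni[of "Suc i" "Suc j"] i j by auto
    show "low m N $$ (i, j) \<noteq> - 1" if "i \<noteq> j"
      using Ni[of "Suc i" "Suc j"] i j that by auto
    fix k assume k: "k \<in> {..<m}" "low m N $$ (i, j) \<noteq> 0" "low m N $$ (i, k) \<noteq> 0"
    then show "j = k" using Nu[of "Suc i" "Suc j" "Suc k"] i j by auto
  qed
  then show ?thesis unfolding NF_def by auto
qed

lemma NF_row0:
  fixes n :: "'a::field mat"
  assumes "NF (Suc m) n" "(1::'a) \<noteq> -1"
  shows "(\<forall>j<m. n $$ (0, Suc j) = 0) \<or>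
    (\<exists>K<m. n $$ (0, Suc K) = 1 \<and> n $$ (0,0) = 0 \<and> (\<forall>j<m. j \<noteq> K \<longrightarrow> n $$ (0, Suc j) = 0)
        \<and> (\<forall>l<m. n $$ (Suc K, Suc l) = 0))"
proof (cases "\<forall>j<m. n $$ (0, Suc j) = 0")
  case False
  then obtain K where K: "K < m" "n $$ (0, Suc K) \<noteq> 0" by auto
  have N: "NFon {..<Suc m} n" using assms unfolding NF_def by auto
  have Ni: "\<And>i j. i < Suc m \<Longrightarrow> j < Suc m \<Longrightarrow> n $$ (i,j) \<in> {0,1,-1} \<and> n $$ (i,j) = n $$ (j,i)
     \<and> (i \<noteq> j \<longrightarrow> n $$ (i,j) \<noteq> -1)"
    using N unfolding NFon_def by blast
  have Nu: "\<And>i j k. i < Suc m \<Longrightarrow> j < Suc m \<Longrightarrow> k < Suc m \<Longrightarrow> n $$ (i,j) \<noteq> 0 \<Longrightarrow> n $$ (i,k) \<noteq> 0 \<Longrightarrow> j = k"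
    using N unfolding NFon_def by blast
  have "n $$ (0, Suc K) \<in> {0,1,-1}" "n $$ (0, Suc K) \<noteq> -1" using Ni[of 0 "Suc K"] K by auto
  then have 1: "n $$ (0, Suc K) = 1" using K by auto
  have 2: "n $$ (0,0) = 0" using Nu[of 0 "Suc K" 0] K by auto
  have 3: "\<forall>j<m. j \<noteq> K \<longrightarrow> n $$ (0, Suc j) = 0" using Nu[of 0 "Suc K"] K by auto
  have s: "n $$ (Suc K, 0) \<noteq> 0" using Ni[of 0 "Suc K"] K by auto
  have 4: "\<forall>l<m. n $$ (Suc K, Suc l) = 0" using Nu[of "Suc K" 0] K s by auto
  show ?thesis using 1 2 3 4 K by blast
qed simp


lemma NF_carrier: "NF m n \<Longrightarrow> n \<in> carrier_mat m m"
  unfolding NF_def by auto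

lemma NF_val: "NF m n \<Longrightarrow> i < m \<Longrightarrow> j < m \<Longrightarrow> n $$ (i,j) \<in> {0,1,-1}"
  unfolding NF_def NFon_def by blast

lemma NF_sym: "NF m n \<Longrightarrow> i < m \<Longrightarrow> j < m \<Longrightarrow> n $$ (i,j) = n $$ (j,i)"
  unfolding NF_def NFon_def by blast

context cjf
begin

lemma one_neq_m1: "(1::'a) \<noteq> -1"
  using two_nz by (simp add: eq_neg_iff_add_eq_0)

lemma NF_H: assumes "NF m n" shows "n \<in> H m"
proof -
  have c: "n \<in> carrier_mat m m" using NF_carrier[OF assms] .
  have "adj n = n"
  proof (rule eq_matI)
    fix i j assume "i < dim_row n" "j < dim_col n"
    then have ij: "i < m" "j < m" using c by auto
    have "cj (n $$ (j,i)) = n $$ (j,i)" using NF_val[OF assms ij(2,1)] by auto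
    then show "adj n $$ (i,j) = n $$ (i,j)" using ij c NF_sym[OF assms ij] by simp
  qed (use c in auto)
  then show ?thesis using c unfolding H_def by auto
qed

lemma val_arg:
  assumes "x \<noteq> 0" "a \<in> {0,1,-1}" "c \<in> {0,1,-1}" "c = x * cj x * a"
  shows "a = c"
proof -
  have nz: "x * cj x \<noteq> 0" using assms(1) by simp
  have p: "x * cj x \<noteq> -1" by (rule pos)
  show ?thesis
  proof (cases "a = 0")
    case True then show ?thesis using assms by simp
  next
    case False
    show ?thesis
    proof (cases "a = 1")
      case True
      then have "c = x * cj x" using assms by simp
      then show ?thesis using assms(3) nz p True by auto
    next
      case False
      then have a: "a = -1" using assms(2) \<open>a \<noteq> 0\<close> by auto
      then have "c = - (x * cj x)" using assms by simp
      have "c \<noteq> 1"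
      proof
        assume "c = 1"
        then have "x * cj x = -1" using \<open>c = - (x * cj x)\<close> by (metis minus_minus)
        with p show False ..
      qed
      moreover have "c \<noteq> 0" using nz \<open>c = - (x * cj x)\<close> by simp
      ultimately have "c \<noteq> 0" "c \<noteq> 1" by auto
      then show ?thesis using assms(3) a by auto
    qed
  qed
qed

lemma NF_unique:
  "NF m n1 \<Longrightarrow> NF m n2 \<Longrightarrow> UTD m b \<Longrightarrow> n2 = b * n1 * adj b \<Longrightarrow> n1 = n2"
proof (induction m arbitrary: n1 n2 b)
  case 0
  then show ?case by (intro eq_matI) (auto simp: NF_def)
next
  case (Suc m)
  have c1: "n1 \<in> carrier_mat (Suc m) (Suc m)" using NF_carrier[OF Suc.prems(1)] .
  have c2: "n2 \<in> carrier_mat (Suc m) (Suc m)" using NF_carrier[OF Suc.prems(2)] .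
  have UTb: "UT (Suc m) b" using Suc.prems(3) unfolding UTD_def by auto
  have bc: "b \<in> carrier_mat (Suc m) (Suc m)" using UTb unfolding UT_def by auto
  have b0: "\<And>i. i < Suc m \<Longrightarrow> 0 < i \<Longrightarrow> b $$ (i,0) = 0" using UTb unfolding UT_def by auto
  have lowU: "UTD m (low m b)" using low_UTD[OF Suc.prems(3)] .
  have "low m n2 = low m b * low m n1 * adj (low m b)"
    using Suc.prems(4) low_cong[OF UTb c1] by simp
  then have IH: "low m n1 = low m n2"
    using Suc.IH[OF NF_low[OF Suc.prems(1)] NF_low[OF Suc.prems(2)] lowU] by simp
  have inner: "n1 $$ (Suc k, Suc l) = n2 $$ (Suc k, Suc l)" if "k < m" "l < m" for k l
    using arg_cong[OF IH, of "\<lambda>M. M $$ (k,l)"] that by simp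
  define x where "x = b $$ (0,0)"
  have x0: "x \<noteq> 0" using Suc.prems(3) unfolding UTD_def x_def by auto
  define uS where "uS k = (\<Sum>l<m. n1 $$ (Suc k, Suc l) * cj (b $$ (0, Suc l)))" for k
  define wS where "wS k = n1 $$ (Suc k, 0) * cj x + uS k" for k
  have v: "n2 $$ (Suc i, 0) = (\<Sum>k<m. low m b $$ (i,k) * wS k)" if i: "i < m" for i
  proof -
    have "n2 $$ (Suc i, 0) = (\<Sum>k<Suc m. \<Sum>l<Suc m. b $$ (Suc i,k) * n1 $$ (k,l) * cj (b $$ (0,l)))"
      using cong_idx[OF bc c1, of "Suc i" 0] Suc.prems(4) i by simp
    also have "\<dots> = (\<Sum>k<m. \<Sum>l<Suc m. b $$ (Suc i,Suc k) * n1 $$ (Suc k,l) * cj (b $$ (0,l)))"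
      using b0 i by (simp add: sum.lessThan_Suc_shift del: sum.lessThan_Suc)
    also have "\<dots> = (\<Sum>k<m. low m b $$ (i,k) * wS k)"
    proof (rule sum.cong[OF refl])
      fix k assume k: "k \<in> {..<m}"
      have "(\<Sum>l<Suc m. b $$ (Suc i,Suc k) * n1 $$ (Suc k,l) * cj (b $$ (0,l)))
         = b $$ (Suc i,Suc k) * (\<Sum>l<Suc m. n1 $$ (Suc k,l) * cj (b $$ (0,l)))"
        by (simp add: sum_distrib_left mult.assoc del: sum.lessThan_Suc)
      also have "(\<Sum>l<Suc m. n1 $$ (Suc k,l) * cj (b $$ (0,l))) = wS k"
        unfolding wS_def uS_def x_def by (simp add: sum.lessThan_Suc_shift del: sum.lessThan_Suc)
      finally show "(\<Sum>l<Suc m. b $$ (Suc i,Suc k) * n1 $$ (Suc k,l) * cj (b $$ (0,l)))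
         = low m b $$ (i,k) * wS k" using k i by simp
    qed
    finally show ?thesis .
  qed
  have d00: "n2 $$ (0,0) = x * (n1 $$ (0,0) * cj x + (\<Sum>l<m. n1 $$ (0,Suc l) * cj (b $$ (0,Suc l))))
      + (\<Sum>k<m. b $$ (0,Suc k) * wS k)"
  proof -
    have "n2 $$ (0,0) = (\<Sum>k<Suc m. \<Sum>l<Suc m. b $$ (0,k) * n1 $$ (k,l) * cj (b $$ (0,l)))"
      using cong_idx[OF bc c1, of 0 0] Suc.prems(4) by simp
    also have "\<dots> = (\<Sum>k<Suc m. b $$ (0,k) * (\<Sum>l<Suc m. n1 $$ (k,l) * cj (b $$ (0,l))))"
      by (simp add: sum_distrib_left mult.assoc del: sum.lessThan_Suc)
    also have "\<dots> = x * (n1 $$ (0,0) * cj x + (\<Sum>l<m. n1 $$ (0,Suc l) * cj (b $$ (0,Suc l))))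
      + (\<Sum>k<m. b $$ (0,Suc k) * wS k)"
      unfolding wS_def uS_def x_def by (simp add: sum.lessThan_Suc_shift del: sum.lessThan_Suc)
    finally show ?thesis .
  qed
  have sym1: "\<And>i j. i < Suc m \<Longrightarrow> j < Suc m \<Longrightarrow> n1 $$ (i,j) = n1 $$ (j,i)"
    using NF_sym[OF Suc.prems(1)] by blast
  have sym2: "\<And>i j. i < Suc m \<Longrightarrow> j < Suc m \<Longrightarrow> n2 $$ (i,j) = n2 $$ (j,i)"
    using NF_sym[OF Suc.prems(2)] by blast
  have MA: "\<exists>r<m. wS r \<noteq> 0 \<and> n2 $$ (Suc r, 0) \<noteq> 0" if ex: "\<exists>s<m. wS s \<noteq> 0"
  proof -
    obtain r where r: "r < m" "wS r \<noteq> 0" "(\<Sum>s<m. low m b $$ (r,s) * wS s) \<noteq> 0"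
      using maxarg[OF lowU ex] by blast
    then show ?thesis using v[of r] by auto
  qed
  have R: "n1 $$ (0,0) = n2 $$ (0,0) \<and> (\<forall>j<m. n1 $$ (0, Suc j) = n2 $$ (0, Suc j))"
  proof -
    note r1 = NF_row0[OF Suc.prems(1) one_neq_m1]
    note r2 = NF_row0[OF Suc.prems(2) one_neq_m1]
    show ?thesis
    proof (cases "\<forall>j<m. n1 $$ (0, Suc j) = 0")
      case A1: True
      have wu: "wS k = uS k" if "k < m" for k
        using A1 sym1[of "Suc k" 0] that unfolding wS_def by simp
      show ?thesis
      proof (cases "\<forall>j<m. n2 $$ (0, Suc j) = 0")
        case A2: True
        have wz: "wS k = 0" if kk: "k < m" for k
        proof (rule ccontr)
          assume "wS k \<noteq> 0"
          then obtain r where "r < m" "n2 $$ (Suc r, 0) \<noteq> 0" using MA kk by blast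
          then show False using A2 sym2[of "Suc r" 0] by auto
        qed
        have "n2 $$ (0,0) = x * cj x * n1 $$ (0,0)"
          using d00 A1 wz by (simp add: algebra_simps)
        then have "n1 $$ (0,0) = n2 $$ (0,0)"
          using val_arg[OF x0 NF_val[OF Suc.prems(1)] NF_val[OF Suc.prems(2)]] by auto
        then show ?thesis using A1 A2 by auto
      next
        case False
        then obtain K2 where K2: "K2 < m" "n2 $$ (0, Suc K2) = 1" "n2 $$ (0,0) = 0"
          "\<forall>j<m. j \<noteq> K2 \<longrightarrow> n2 $$ (0, Suc j) = 0" "\<forall>l<m. n2 $$ (Suc K2, Suc l) = 0"
          using r2 by blast
        have "\<exists>s<m. wS s \<noteq> 0"
        proof (rule ccontr)
          assume "\<not> ?thesis"
          then have "n2 $$ (Suc K2, 0) = 0" using v[OF K2(1)] by auto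
          then show False using K2 sym2[of "Suc K2" 0] by auto
        qed
        then obtain r where r: "r < m" "wS r \<noteq> 0" "n2 $$ (Suc r, 0) \<noteq> 0" using MA by blast
        have "r = K2" using r K2(4) sym2[of "Suc r" 0] by (metis Suc_less_eq zero_less_Suc)
        moreover have "uS K2 = 0" unfolding uS_def using inner K2 by simp
        ultimately show ?thesis using r wu by simp
      qed
    next
      case False
      then obtain K1 where K1: "K1 < m" "n1 $$ (0, Suc K1) = 1" "n1 $$ (0,0) = 0"
          "\<forall>j<m. j \<noteq> K1 \<longrightarrow> n1 $$ (0, Suc j) = 0" "\<forall>l<m. n1 $$ (Suc K1, Suc l) = 0"
        using r1 by blast
      have "uS K1 = 0" unfolding uS_def using K1 by simp
      then have "wS K1 = cj x" unfolding wS_def using K1 sym1[of "Suc K1" 0] by simp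
      then have "\<exists>s<m. wS s \<noteq> 0" using K1(1) x0 by auto
      then obtain r where r: "r < m" "wS r \<noteq> 0" "n2 $$ (Suc r, 0) \<noteq> 0" using MA by blast
      show ?thesis
      proof (cases "\<forall>j<m. n2 $$ (0, Suc j) = 0")
        case True
        then show ?thesis using r sym2[of "Suc r" 0] by auto
      next
        case False
        then obtain K2 where K2: "K2 < m" "n2 $$ (0, Suc K2) = 1" "n2 $$ (0,0) = 0"
          "\<forall>j<m. j \<noteq> K2 \<longrightarrow> n2 $$ (0, Suc j) = 0" "\<forall>l<m. n2 $$ (Suc K2, Suc l) = 0"
          using r2 by blast
        have "r = K2" using r K2(4) sym2[of "Suc r" 0] by (metis Suc_less_eq zero_less_Suc)
        moreover have "uS K2 = 0" unfolding uS_def using inner K2 by simp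
        ultimately have "n1 $$ (Suc K2, 0) \<noteq> 0" using r unfolding wS_def by auto
        then have "n1 $$ (0, Suc K2) \<noteq> 0" using sym1[of "Suc K2" 0] K2 by auto
        then have "K2 = K1" using K1(4) K2(1) by auto
        then show ?thesis using K1 K2 by (metis (no_types, lifting))
      qed
    qed
  qed
  show ?case
  proof (rule eq_matI)
    fix i j assume "i < dim_row n2" "j < dim_col n2"
    then have ij: "i < Suc m" "j < Suc m" using c2 by auto
    show "n1 $$ (i,j) = n2 $$ (i,j)"
    proof (cases i)
      case 0
      then show ?thesis using R ij by (cases j) auto
    next
      case (Suc i')
      show ?thesis
      proof (cases j)
        case 0
        then show ?thesis using R ij Suc sym1[of i 0] sym2[of i 0] by auto
      next
        case (Suc j')
        then show ?thesis using inner[of i' j'] ij \<open>i = Suc i'\<close> by auto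
      qed
    qed
  qed (use c1 c2 in auto)
qed


end
context cjf
begin

definition reach :: "nat \<Rightarrow> 'a mat \<Rightarrow> 'a mat \<Rightarrow> bool" where
  "reach m z w \<longleftrightarrow> (\<exists>b. UTD m b \<and> w = b * z * adj b)"

lemma reach_refl: "z \<in> carrier_mat m m \<Longrightarrow> reach m z z"
  unfolding reach_def by (auto intro!: exI[of _ "1\<^sub>m m"] UTD_one)

lemma reach_trans:
  assumes "z \<in> carrier_mat m m" "reach m z w" "reach m w v"
  shows "reach m z v"
proof -
  obtain b c where h: "UTD m b" "w = b * z * adj b" "UTD m c" "v = c * w * adj c"
    using assms unfolding reach_def by auto
  have cc: "b \<in> carrier_mat m m" "c \<in> carrier_mat m m"
    using h unfolding UTD_def UT_def by auto
  have "v = (c * b) * z * adj (c * b)" using h cong_comp[OF cc assms(1)] by simp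
  then show ?thesis using UTD_mult[OF h(3,1)] unfolding reach_def by blast
qed

lemma reach_em:
  "k \<le> l \<Longrightarrow> l < m \<Longrightarrow> (k = l \<Longrightarrow> 1 + a \<noteq> 0) \<Longrightarrow> reach m z (em m k l a * z * adj (em m k l a))"
  unfolding reach_def using em_UTD by blast

lemma low_H: assumes "z \<in> H (Suc m)" shows "low m z \<in> H m"
proof -
  have "adj (low m z) = low m z"
  proof (rule eq_matI)
    fix i j assume "i < dim_row (low m z)" "j < dim_col (low m z)"
    then have ij: "i < m" "j < m" by auto
    then have "adj (low m z) $$ (i,j) = cj (z $$ (Suc j, Suc i))" by simp
    also have "\<dots> = z $$ (Suc i, Suc j)" using H_entry[OF assms, of "Suc i" "Suc j"] ij by simp
    finally show "adj (low m z) $$ (i,j) = low m z $$ (i,j)" using ij by simp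
  qed auto
  then show ?thesis unfolding H_def by auto
qed

lemma lift_exists:
  assumes "UTD m b'"
  shows "\<exists>b. UTD (Suc m) b \<and> low m b = b'"
proof -
  define b where "b = mat (Suc m) (Suc m) (\<lambda>(i,j). if i = 0 \<and> j = 0 then 1 else
     if i = 0 \<or> j = 0 then 0 else b' $$ (i - 1, j - 1))"
  have b'c: "b' \<in> carrier_mat m m" using assms unfolding UTD_def UT_def by auto
  have bc: "b \<in> carrier_mat (Suc m) (Suc m)" unfolding b_def by simp
  have lo: "b $$ (i,j) = 0" if ij: "i < Suc m" "j < i" for i j
  proof (cases j)
    case 0
    then show ?thesis using ij unfolding b_def by simp
  next
    case (Suc j')
    then obtain i' where i': "i = Suc i'" using ij by (cases i) auto
    then have "b $$ (i,j) = b' $$ (i',j')" using ij Suc unfolding b_def by simp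
    also have "\<dots> = 0" using assms ij i' Suc unfolding UTD_def UT_def by simp
    finally show ?thesis .
  qed
  have di: "b $$ (i,i) \<noteq> 0" if "i < Suc m" for i
  proof (cases i)
    case 0
    then show ?thesis unfolding b_def by simp
  next
    case (Suc i')
    then have "b $$ (i,i) = b' $$ (i',i')" using that unfolding b_def by simp
    also have "\<dots> \<noteq> 0" using assms that Suc unfolding UTD_def by simp
    finally show ?thesis .
  qed
  have "UTD (Suc m) b" unfolding UTD_def UT_def using bc lo di by blast
  moreover have "low m b = b'"
  proof (rule eq_matI)
    fix i j assume "i < dim_row b'" "j < dim_col b'"
    then have "i < m" "j < m" using b'c by auto
    then show "low m b $$ (i,j) = b' $$ (i,j)" unfolding b_def by simp
  qed (use b'c in auto)
  ultimately show ?thesis by blast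
qed

definition D :: "nat \<Rightarrow> 'a mat \<Rightarrow> nat set" where
  "D m N = {k. k < m \<and> (\<exists>l<m. N $$ (Suc k, Suc l) \<noteq> 0)}"

lemma D_low: "low m N' = low m N \<Longrightarrow> D m N' = D m N"
proof -
  assume h: "low m N' = low m N"
  have "N' $$ (Suc k, Suc l) = N $$ (Suc k, Suc l)" if "k < m" "l < m" for k l
    using arg_cong[OF h, of "\<lambda>M. M $$ (k,l)"] that by simp
  then show ?thesis unfolding D_def by auto
qed

lemma low_eqI:
  assumes "\<And>i j. i < m \<Longrightarrow> j < m \<Longrightarrow> N' $$ (Suc i, Suc j) = N $$ (Suc i, Suc j)"
  shows "low m N' = low m N"
  by (rule eq_matI) (use assms in auto)

lemma lowNF_facts:
  assumes "NF m (low m N)"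
  shows "\<And>i j. i < m \<Longrightarrow> j < m \<Longrightarrow> N $$ (Suc i, Suc j) = N $$ (Suc j, Suc i)"
    and "\<And>i j k. i < m \<Longrightarrow> j < m \<Longrightarrow> k < m \<Longrightarrow> N $$ (Suc i, Suc j) \<noteq> 0 \<Longrightarrow> N $$ (Suc i, Suc k) \<noteq> 0 \<Longrightarrow> j = k"
    and "\<And>i j. i < m \<Longrightarrow> j < m \<Longrightarrow> N $$ (Suc i, Suc j) \<in> {0,1,-1}"
proof -
  have N: "NFon {..<m} (low m N)" using assms unfolding NF_def by auto
  fix i j k assume i: "i < m" and j: "j < m"
  have "low m N $$ (i,j) = low m N $$ (j,i)" using N i j unfolding NFon_def by blast
  then show "N $$ (Suc i, Suc j) = N $$ (Suc j, Suc i)" using i j by simp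
  have "low m N $$ (i,j) \<in> {0,1,-1}" using N i j unfolding NFon_def by blast
  then show "N $$ (Suc i, Suc j) \<in> {0,1,-1}" using i j by simp
  assume k: "k < m" and nz: "N $$ (Suc i, Suc j) \<noteq> 0" "N $$ (Suc i, Suc k) \<noteq> 0"
  have "low m N $$ (i,j) \<noteq> 0 \<longrightarrow> low m N $$ (i,k) \<noteq> 0 \<longrightarrow> j = k"
    using N i j k unfolding NFon_def by blast
  then show "j = k" using nz i j k by simp
qed

lemma stepA:
  "\<And>N. N \<in> H (Suc m) \<Longrightarrow> NF m (low m N) \<Longrightarrow> card {k \<in> D m N. N $$ (Suc k, 0) \<noteq> 0} = c \<Longrightarrow>
    \<exists>N'. reach (Suc m) N N' \<and> N' \<in> H (Suc m) \<and> low m N' = low m N \<and> (\<forall>k \<in> D m N. N' $$ (Suc k, 0) = 0)"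
proof (induction c)
  case 0
  have "finite (D m N)" unfolding D_def by auto
  then have "\<forall>k \<in> D m N. N $$ (Suc k, 0) = 0" using 0 by auto
  then show ?case using 0 reach_refl[of N "Suc m"] unfolding H_def by auto
next
  case (Suc c N)
  have Nc: "N \<in> carrier_mat (Suc m) (Suc m)" using Suc.prems unfolding H_def by auto
  note F = lowNF_facts[OF Suc.prems(2)]
  have fin: "finite (D m N)" unfolding D_def by auto
  have ne: "{k \<in> D m N. N $$ (Suc k, 0) \<noteq> 0} \<noteq> {}"
  proof
    assume "{k \<in> D m N. N $$ (Suc k, 0) \<noteq> 0} = {}"
    then have "card {k \<in> D m N. N $$ (Suc k, 0) \<noteq> 0} = 0" by (simp only: card.empty)
    with Suc.prems(3) show False by simp
  qed
  obtain k where k: "k \<in> D m N" "N $$ (Suc k, 0) \<noteq> 0" using ne by blast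
  obtain p where p: "p < m" "N $$ (Suc k, Suc p) \<noteq> 0" using k unfolding D_def by auto
  have km: "k < m" using k unfolding D_def by auto
  define a where "a = cj (- N $$ (Suc k, 0) / N $$ (Suc k, Suc p))"
  define N1 where "N1 = em (Suc m) 0 (Suc p) a * N * adj (em (Suc m) 0 (Suc p) a)"
  have E: "N1 $$ (i,j) = N $$ (i,j) + (if i = 0 then a * N $$ (Suc p, j) else 0)
     + (if j = 0 then cj a * N $$ (i, Suc p) else 0) + (if i = 0 \<and> j = 0 then a * cj a * N $$ (Suc p, Suc p) else 0)"
    if "i < Suc m" "j < Suc m" for i j
    unfolding N1_def using em_cong[OF Nc _ _ that, of 0 "Suc p" a] p by simp
  have H1: "N1 \<in> H (Suc m)" unfolding N1_def using H_cong[OF Suc.prems(1)] by simp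
  have L1: "low m N1 = low m N" by (rule low_eqI) (simp add: E)
  have D1: "D m N1 = D m N" using D_low[OF L1] .
  have col: "N1 $$ (Suc i, 0) = (if i = k then 0 else N $$ (Suc i, 0))" if i: "i < m" for i
  proof (cases "i = k")
    case True
    then show ?thesis using E[of "Suc i" 0] i p unfolding a_def by simp
  next
    case False
    have "N $$ (Suc i, Suc p) = 0"
    proof (rule ccontr)
      assume "N $$ (Suc i, Suc p) \<noteq> 0"
      then have "N $$ (Suc p, Suc i) \<noteq> 0" using F(1)[of i p] i p by simp
      moreover have "N $$ (Suc p, Suc k) \<noteq> 0" using F(1)[of k p] km p by simp
      ultimately show False using F(2)[of p i k] i km p False by simp
    qed
    then show ?thesis using E[of "Suc i" 0] i False by simp
  qed
  have "{k' \<in> D m N1. N1 $$ (Suc k', 0) \<noteq> 0} = {k' \<in> D m N. N $$ (Suc k', 0) \<noteq> 0} - {k}"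
    using col D1 unfolding D_def by (auto split: if_splits)
  then have "card {k' \<in> D m N1. N1 $$ (Suc k', 0) \<noteq> 0} = c"
    using Suc.prems(3) k fin by (simp add: card_Diff_singleton)
  then obtain N' where N': "reach (Suc m) N1 N'" "N' \<in> H (Suc m)" "low m N' = low m N1"
     "\<forall>k \<in> D m N1. N' $$ (Suc k, 0) = 0"
    using Suc.IH[OF H1 _] L1 Suc.prems(2) by auto
  have "reach (Suc m) N N1" unfolding N1_def using p by (intro reach_em) auto
  then have "reach (Suc m) N N'" using reach_trans[OF Nc _ N'(1)] by blast
  then show ?case using N' L1 D1 by auto
qed


definition Bz :: "nat \<Rightarrow> 'a mat \<Rightarrow> nat set" where
  "Bz m N = {k. k < m \<and> k \<notin> D m N \<and> N $$ (Suc k, 0) \<noteq> 0}"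

lemma notD: "k \<notin> D m N \<Longrightarrow> l < m \<Longrightarrow> k < m \<Longrightarrow> N $$ (Suc k, Suc l) = 0"
  unfolding D_def by auto

lemma stepB:
  "\<And>N. N \<in> H (Suc m) \<Longrightarrow> NF m (low m N) \<Longrightarrow> (\<forall>k \<in> D m N. N $$ (Suc k, 0) = 0) \<Longrightarrow> card (Bz m N) = c \<Longrightarrow>
    \<exists>N'. reach (Suc m) N N' \<and> N' \<in> H (Suc m) \<and> low m N' = low m N \<and> (\<forall>k \<in> D m N. N' $$ (Suc k, 0) = 0)
      \<and> card (Bz m N') \<le> 1"
proof (induction c rule: less_induct)
  case (less c N)
  have Nc: "N \<in> carrier_mat (Suc m) (Suc m)" using less.prems unfolding H_def by auto
  show ?case
  proof (cases "c \<le> 1")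
    case True
    then show ?thesis using less.prems reach_refl[OF Nc] by auto
  next
    case False
    note F = lowNF_facts[OF less.prems(2)]
    have fin: "finite (Bz m N)" unfolding Bz_def by auto
    have ne: "Bz m N \<noteq> {}" using False less.prems(4) by auto
    define K where "K = Max (Bz m N)"
    have K: "K \<in> Bz m N" using fin ne unfolding K_def by auto
    have "\<exists>j \<in> Bz m N. j \<noteq> K"
    proof (rule ccontr)
      assume "\<not> ?thesis"
      then have "Bz m N \<subseteq> {K}" by blast
      then have "card (Bz m N) \<le> card {K}" by (intro card_mono) auto
      then show False using False less.prems(4) by simp
    qed
    then obtain j where j: "j \<in> Bz m N" "j \<noteq> K" by blast
    have jK: "j < K" using j Max_ge[OF fin j(1)] unfolding K_def by auto
    have Km: "K < m" and KD: "K \<notin> D m N" and K0: "N $$ (Suc K, 0) \<noteq> 0" using K unfolding Bz_def by auto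
    have jm: "j < m" using j unfolding Bz_def by auto
    have rowK: "N $$ (Suc K, Suc l) = 0" if "l < m" for l using notD[OF KD that Km] .
    have colK: "N $$ (Suc l, Suc K) = 0" if "l < m" for l using rowK[OF that] F(1)[OF that Km] by simp
    define cc where "cc = - N $$ (Suc j, 0) / N $$ (Suc K, 0)"
    define N1 where "N1 = em (Suc m) (Suc j) (Suc K) cc * N * adj (em (Suc m) (Suc j) (Suc K) cc)"
    have E: "N1 $$ (i,i') = N $$ (i,i') + (if i = Suc j then cc * N $$ (Suc K, i') else 0)
       + (if i' = Suc j then cj cc * N $$ (i, Suc K) else 0) + (if i = Suc j \<and> i' = Suc j then cc * cj cc * N $$ (Suc K, Suc K) else 0)"
      if "i < Suc m" "i' < Suc m" for i i'
      unfolding N1_def using em_cong[OF Nc _ _ that, of "Suc j" "Suc K" cc] jm Km by simp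
    have H1: "N1 \<in> H (Suc m)" unfolding N1_def using H_cong[OF less.prems(1)] by simp
    have L1: "low m N1 = low m N"
      by (rule low_eqI) (simp add: E rowK colK Km jm)
    have D1: "D m N1 = D m N" using D_low[OF L1] .
    have col: "N1 $$ (Suc i, 0) = (if i = j then 0 else N $$ (Suc i, 0))" if i: "i < m" for i
      using E[of "Suc i" 0] i K0 unfolding cc_def by auto
    have "Bz m N1 = Bz m N - {j}" using col D1 unfolding Bz_def by (auto split: if_splits)
    then have cN1: "card (Bz m N1) < c" using less.prems(4) j fin False by (simp add: card_Diff_singleton)
    have inv1: "\<forall>k \<in> D m N1. N1 $$ (Suc k, 0) = 0" using D1 col less.prems(3) unfolding D_def by auto
    obtain N' where N': "reach (Suc m) N1 N'" "N' \<in> H (Suc m)" "low m N' = low m N1"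
       "\<forall>k \<in> D m N1. N' $$ (Suc k, 0) = 0" "card (Bz m N') \<le> 1"
    proof -
      have "NF m (low m N1)" using L1 less.prems(2) by simp
      from less.IH[OF cN1 H1 this inv1 refl] show ?thesis using that by blast
    qed
    have "reach (Suc m) N N1" unfolding N1_def using jK Km by (intro reach_em) auto
    then have "reach (Suc m) N N'" using reach_trans[OF Nc _ N'(1)] by blast
    then show ?thesis using N' L1 D1 by auto
  qed
qed

lemma NFonI:
  assumes "\<And>i j. i \<in> A \<Longrightarrow> j \<in> A \<Longrightarrow> N $$ (i,j) \<in> {0,1,-1}"
    "\<And>i j. i \<in> A \<Longrightarrow> j \<in> A \<Longrightarrow> N $$ (i,j) = N $$ (j,i)"
    "\<And>i j. i \<in> A \<Longrightarrow> j \<in> A \<Longrightarrow> i \<noteq> j \<Longrightarrow> N $$ (i,j) \<noteq> -1"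
    "\<And>i j k. i \<in> A \<Longrightarrow> j \<in> A \<Longrightarrow> k \<in> A \<Longrightarrow> N $$ (i,j) \<noteq> 0 \<Longrightarrow> N $$ (i,k) \<noteq> 0 \<Longrightarrow> j = k"
  shows "NFon A N"
  unfolding NFon_def using assms by blast

lemma lowNF_offdiag:
  assumes "NF m (low m N)" "i < m" "j < m" "i \<noteq> j"
  shows "N $$ (Suc i, Suc j) \<noteq> -1"
proof -
  have "low m N $$ (i,j) \<noteq> -1" using assms unfolding NF_def NFon_def by blast
  then show ?thesis using assms by simp
qed

lemma idx_cases:
  assumes "i \<in> {..<Suc m}"
  obtains "i = 0" | i' where "i = Suc i'" "i' < m"
  using assms by (cases i) auto

lemma NF_build:
  assumes HN: "N \<in> H (Suc m)" and L: "NF m (low m N)" and a: "N $$ (0,0) \<in> {0,1,-1}"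
    and c0: "\<And>k. k < m \<Longrightarrow> N $$ (Suc k, 0) \<in> {0,1}"
    and a0: "\<And>k. k < m \<Longrightarrow> N $$ (Suc k, 0) \<noteq> 0 \<Longrightarrow> N $$ (0,0) = 0"
    and u0: "\<And>k k'. k < m \<Longrightarrow> k' < m \<Longrightarrow> N $$ (Suc k, 0) \<noteq> 0 \<Longrightarrow> N $$ (Suc k', 0) \<noteq> 0 \<Longrightarrow> k = k'"
    and rK: "\<And>k l. k < m \<Longrightarrow> l < m \<Longrightarrow> N $$ (Suc k, 0) \<noteq> 0 \<Longrightarrow> N $$ (Suc k, Suc l) = 0"
  shows "NF (Suc m) N"
proof -
  have Nc: "N \<in> carrier_mat (Suc m) (Suc m)" using HN unfolding H_def by auto
  note F = lowNF_facts[OF L]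
  have r0: "N $$ (0, Suc k) = N $$ (Suc k, 0)" if "k < m" for k
  proof -
    have "N $$ (0, Suc k) = cj (N $$ (Suc k, 0))" using H_entry[OF HN, of 0 "Suc k"] that by simp
    also have "\<dots> = N $$ (Suc k, 0)" using c0[OF that] by auto
    finally show ?thesis .
  qed
  have "NFon {..<Suc m} N"
  proof (rule NFonI)
    fix i j assume i: "i \<in> {..<Suc m}" and j: "j \<in> {..<Suc m}"
    show "N $$ (i,j) \<in> {0,1,-1}"
    proof (cases rule: idx_cases[OF i])
      case 1 then show ?thesis
        by (cases rule: idx_cases[OF j]) (use a c0 r0 in auto)
    next
      case (2 i') then show ?thesis
        by (cases rule: idx_cases[OF j]) (use c0 F(3) in auto)
    qed
    show "N $$ (i,j) = N $$ (j,i)"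
    proof (cases rule: idx_cases[OF i])
      case 1 then show ?thesis
        by (cases rule: idx_cases[OF j]) (use r0 in auto)
    next
      case (2 i') then show ?thesis
        by (cases rule: idx_cases[OF j]) (use r0 F(1) in auto)
    qed
    show "N $$ (i,j) \<noteq> -1" if ij: "i \<noteq> j"
    proof (cases rule: idx_cases[OF i])
      case 1 then show ?thesis
      proof (cases rule: idx_cases[OF j])
        case (2 j')
        then show ?thesis using 1 r0[of j'] c0[of j'] one_neq_m1 by auto
      qed (use ij in auto)
    next
      case (2 i') then show ?thesis
      proof (cases rule: idx_cases[OF j])
        case 1
        then show ?thesis using 2 c0[of i'] one_neq_m1 by auto
      next
        case (2 j')
        then show ?thesis using \<open>i = Suc i'\<close> \<open>i' < m\<close> ij lowNF_offdiag[OF L, of i' j'] by auto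
      qed
    qed
    fix k assume k: "k \<in> {..<Suc m}" and nz: "N $$ (i,j) \<noteq> 0" "N $$ (i,k) \<noteq> 0"
    have col0: "\<exists>k'. k' < m \<and> N $$ (Suc k', 0) \<noteq> 0 \<and> x = Suc k'" if x: "x \<in> {..<Suc m}" "x \<noteq> 0" "N $$ (0, x) \<noteq> 0" for x
      using x r0 by (cases rule: idx_cases[OF x(1)]) auto
    show "j = k"
    proof (cases rule: idx_cases[OF i])
      case 1
      show ?thesis
      proof (cases "j = 0 \<or> k = 0")
        case True
        then have "N $$ (0,0) \<noteq> 0" using nz 1 by auto
        then have "j = 0 \<and> k = 0" using col0[OF j] col0[OF k] nz 1 a0 by (metis)
        then show ?thesis by simp
      next
        case False
        then obtain j' k' where "j' < m" "N $$ (Suc j', 0) \<noteq> 0" "j = Suc j'"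
          "k' < m" "N $$ (Suc k', 0) \<noteq> 0" "k = Suc k'"
          using col0[OF j] col0[OF k] nz 1 by metis
        then show ?thesis using u0 by blast
      qed
    next
      case (2 i')
      show ?thesis
      proof (cases "N $$ (Suc i', 0) = 0")
        case True
        have "j \<noteq> 0" "k \<noteq> 0" using nz True 2 by (metis)+
        then obtain j' k' where "j = Suc j'" "j' < m" "k = Suc k'" "k' < m"
          using j k by (metis idx_cases)
        then show ?thesis using F(2)[of i' j' k'] nz 2 by auto
      next
        case False
        have "j = 0"
        proof (rule ccontr)
          assume "j \<noteq> 0"
          then obtain j' where "j = Suc j'" "j' < m" using j by (metis idx_cases)
          then show False using rK[of i' j'] False nz 2 by auto
        qed
        moreover have "k = 0"
        proof (rule ccontr)
          assume "k \<noteq> 0"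
          then obtain k' where "k = Suc k'" "k' < m" using k by (metis idx_cases)
          then show False using rK[of i' k'] False nz 2 by auto
        qed
        ultimately show ?thesis by simp
      qed
    qed
  qed
  then show ?thesis using Nc unfolding NF_def by auto
qed


lemma stepC:
  assumes HN: "N \<in> H (Suc m)" and L: "NF m (low m N)" and dz: "\<forall>k \<in> D m N. N $$ (Suc k, 0) = 0"
    and cb: "card (Bz m N) \<le> 1"
  shows "\<exists>N'. reach (Suc m) N N' \<and> NF (Suc m) N'"
proof -
  have Nc: "N \<in> carrier_mat (Suc m) (Suc m)" using HN unfolding H_def by auto
  note F = lowNF_facts[OF L]
  have fin: "finite (Bz m N)" unfolding Bz_def by auto
  show ?thesis
  proof (cases "Bz m N = {}")
    case True
    have c0z: "N $$ (Suc k, 0) = 0" if k: "k < m" for k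
    proof (cases "k \<in> D m N")
      case True then show ?thesis using dz by auto
    next
      case False then show ?thesis using \<open>Bz m N = {}\<close> k unfolding Bz_def by auto
    qed
    define a where "a = N $$ (0,0)"
    have cja: "cj a = a" using H_entry[OF HN, of 0 0] unfolding a_def by simp
    show ?thesis
    proof (cases "a = 0")
      case True
      have "NF (Suc m) N"
        by (rule NF_build[OF HN L]) (use True c0z in \<open>auto simp: a_def\<close>)
      then show ?thesis using reach_refl[OF Nc] by auto
    next
      case False
      obtain x where x: "x * cj x * a = 1 \<or> x * cj x * a = -1" using norm[OF cja False] by auto
      then have x0: "x \<noteq> 0" by auto
      define N1 where "N1 = em (Suc m) 0 0 (x - 1) * N * adj (em (Suc m) 0 0 (x - 1))"
      have E: "N1 $$ (i,j) = N $$ (i,j) + (if i = 0 then (x - 1) * N $$ (0, j) else 0)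
         + (if j = 0 then cj (x - 1) * N $$ (i, 0) else 0) + (if i = 0 \<and> j = 0 then (x - 1) * cj (x - 1) * N $$ (0, 0) else 0)"
        if "i < Suc m" "j < Suc m" for i j
        unfolding N1_def using em_cong[OF Nc _ _ that, of 0 0 "x - 1"] by simp
      have H1: "N1 \<in> H (Suc m)" unfolding N1_def using H_cong[OF HN] by simp
      have L1: "low m N1 = low m N" by (rule low_eqI) (simp add: E)
      have e00: "N1 $$ (0,0) = x * cj x * a"
        using E[of 0 0] unfolding a_def by (simp add: cj_diff algebra_simps)
      have e0: "N1 $$ (Suc k, 0) = 0" if "k < m" for k using E[of "Suc k" 0] c0z[OF that] that by simp
      have "NF (Suc m) N1"
        by (rule NF_build[OF H1]) (use L1 L e00 x e0 in auto)
      moreover have "reach (Suc m) N N1" unfolding N1_def using x0 by (intro reach_em) auto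
      ultimately show ?thesis by blast
    qed
  next
    case False
    then obtain K where K: "K \<in> Bz m N" by auto
    have onlyK: "k = K" if "k \<in> Bz m N" for k
      using cb fin K that by (metis One_nat_def card_le_Suc0_iff_eq)
    have Km: "K < m" and KD: "K \<notin> D m N" and K0: "N $$ (Suc K, 0) \<noteq> 0" using K unfolding Bz_def by auto
    have c0: "N $$ (Suc k, 0) = 0" if k: "k < m" "k \<noteq> K" for k
    proof (cases "k \<in> D m N")
      case True then show ?thesis using dz by auto
    next
      case False then show ?thesis using onlyK[of k] k unfolding Bz_def by auto
    qed
    have rowK: "N $$ (Suc K, Suc l) = 0" if "l < m" for l using notD[OF KD that Km] .
    have colK: "N $$ (Suc l, Suc K) = 0" if "l < m" for l using rowK[OF that] F(1)[OF that Km] by simp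
    define s where "s = 1 / N $$ (Suc K, 0)"
    have s0: "s \<noteq> 0" using K0 unfolding s_def by simp
    define N1 where "N1 = em (Suc m) (Suc K) (Suc K) (s - 1) * N * adj (em (Suc m) (Suc K) (Suc K) (s - 1))"
    have E: "N1 $$ (i,j) = N $$ (i,j) + (if i = Suc K then (s - 1) * N $$ (Suc K, j) else 0)
         + (if j = Suc K then cj (s - 1) * N $$ (i, Suc K) else 0) + (if i = Suc K \<and> j = Suc K then (s - 1) * cj (s - 1) * N $$ (Suc K, Suc K) else 0)"
      if "i < Suc m" "j < Suc m" for i j
      unfolding N1_def using em_cong[OF Nc _ _ that, of "Suc K" "Suc K" "s - 1"] Km by simp
    have H1: "N1 \<in> H (Suc m)" unfolding N1_def using H_cong[OF HN] by simp
    have L1: "low m N1 = low m N" by (rule low_eqI) (simp add: E rowK colK Km)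
    have N1c: "N1 \<in> carrier_mat (Suc m) (Suc m)" using H1 unfolding H_def by auto
    have e00: "N1 $$ (0,0) = N $$ (0,0)" using E[of 0 0] by simp
    have e0: "N1 $$ (Suc k, 0) = (if k = K then 1 else 0)" if k: "k < m" for k
    proof (cases "k = K")
      case True
      have "N1 $$ (Suc k, 0) = s * N $$ (Suc K, 0)" using E[of "Suc k" 0] k True by (simp add: algebra_simps)
      then show ?thesis using True K0 unfolding s_def by simp
    next
      case False then show ?thesis using E[of "Suc k" 0] k c0 by simp
    qed
    have inner1: "N1 $$ (Suc i, Suc j) = N $$ (Suc i, Suc j)" if "i < m" "j < m" for i j
      using arg_cong[OF L1, of "\<lambda>M. M $$ (i,j)"] that by simp
    define t where "t = - N1 $$ (0,0) / 2"
    define N2 where "N2 = em (Suc m) 0 (Suc K) t * N1 * adj (em (Suc m) 0 (Suc K) t)"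
    have E2: "N2 $$ (i,j) = N1 $$ (i,j) + (if i = 0 then t * N1 $$ (Suc K, j) else 0)
         + (if j = 0 then cj t * N1 $$ (i, Suc K) else 0) + (if i = 0 \<and> j = 0 then t * cj t * N1 $$ (Suc K, Suc K) else 0)"
      if "i < Suc m" "j < Suc m" for i j
      unfolding N2_def using em_cong[OF N1c _ _ that, of 0 "Suc K" t] Km by simp
    have H2: "N2 \<in> H (Suc m)" unfolding N2_def using H_cong[OF H1] by simp
    have KK: "N1 $$ (Suc K, Suc K) = 0" using inner1[OF Km Km] rowK[OF Km] by simp
    have ci: "N1 $$ (Suc i, Suc K) = 0" if "i < m" for i using inner1[OF that Km] colK[OF that] by simp
    have r1: "N1 $$ (0, Suc K) = 1" using H_entry[OF H1, of 0 "Suc K"] e0[OF Km] Km by simp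
    have c00: "cj (N1 $$ (0,0)) = N1 $$ (0,0)" using H_entry[OF H1, of 0 0] by simp
    have L2: "low m N2 = low m N" using L1 by (subst L1[symmetric]) (rule low_eqI, simp add: E2)
    have f00: "N2 $$ (0,0) = 0"
    proof -
      have "N2 $$ (0,0) = N1 $$ (0,0) + t + cj t" using E2[of 0 0] e0[OF Km] r1 KK by simp
      also have "\<dots> = 0" unfolding t_def using c00 two_nz by (simp add: field_simps)
      finally show ?thesis .
    qed
    have f0: "N2 $$ (Suc k, 0) = (if k = K then 1 else 0)" if k: "k < m" for k
      using E2[of "Suc k" 0] k ci e0 by simp
    have inner2: "N2 $$ (Suc i, Suc j) = N $$ (Suc i, Suc j)" if "i < m" "j < m" for i j
      using arg_cong[OF L2, of "\<lambda>M. M $$ (i,j)"] that by simp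
    have "NF (Suc m) N2"
    proof (rule NF_build[OF H2])
      show "NF m (low m N2)" using L2 L by simp
      show "N2 $$ (0,0) \<in> {0,1,-1}" using f00 by simp
      show "\<And>k. k < m \<Longrightarrow> N2 $$ (Suc k, 0) \<in> {0,1}" using f0 by simp
      show "\<And>k. k < m \<Longrightarrow> N2 $$ (Suc k, 0) \<noteq> 0 \<Longrightarrow> N2 $$ (0,0) = 0" using f00 by simp
      show "\<And>k k'. k < m \<Longrightarrow> k' < m \<Longrightarrow> N2 $$ (Suc k, 0) \<noteq> 0 \<Longrightarrow> N2 $$ (Suc k', 0) \<noteq> 0 \<Longrightarrow> k = k'"
        using f0 by (metis)
      show "\<And>k l. k < m \<Longrightarrow> l < m \<Longrightarrow> N2 $$ (Suc k, 0) \<noteq> 0 \<Longrightarrow> N2 $$ (Suc k, Suc l) = 0"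
        using f0 inner2 rowK by (metis)
    qed
    moreover have "reach (Suc m) N N1" unfolding N1_def using s0 by (intro reach_em) (auto simp: Km)
    moreover have "reach (Suc m) N1 N2" unfolding N2_def by (intro reach_em) (auto simp: Km)
    ultimately show ?thesis using reach_trans[OF Nc] by blast
  qed
qed

lemma NF_exists: "z \<in> H m \<Longrightarrow> \<exists>N. reach m z N \<and> NF m N"
proof (induction m arbitrary: z)
  case 0
  have "z \<in> carrier_mat 0 0" using 0 unfolding H_def by auto
  then show ?case using reach_refl unfolding NF_def NFon_def by auto
next
  case (Suc m z)
  have zc: "z \<in> carrier_mat (Suc m) (Suc m)" using Suc.prems unfolding H_def by auto
  obtain N' where N': "reach m (low m z) N'" "NF m N'" using Suc.IH[OF low_H[OF Suc.prems]] by auto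
  obtain b' where b': "UTD m b'" "N' = b' * low m z * adj b'" using N'(1) unfolding reach_def by auto
  obtain b where b: "UTD (Suc m) b" "low m b = b'" using lift_exists[OF b'(1)] by auto
  define z1 where "z1 = b * z * adj b"
  have bc: "b \<in> carrier_mat (Suc m) (Suc m)" using b unfolding UTD_def UT_def by auto
  have r1: "reach (Suc m) z z1" unfolding z1_def reach_def using b by auto
  have H1: "z1 \<in> H (Suc m)" unfolding z1_def using H_cong[OF Suc.prems bc] .
  have L1: "low m z1 = N'" unfolding z1_def
    using low_cong[of m b z] b b' zc unfolding UTD_def by simp
  obtain z2 where z2: "reach (Suc m) z1 z2" "z2 \<in> H (Suc m)" "low m z2 = low m z1"
      "\<forall>k \<in> D m z1. z2 $$ (Suc k, 0) = 0"
    using stepA[OF H1 _ refl] L1 N'(2) by auto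
  have D2: "D m z2 = D m z1" using D_low[OF z2(3)] .
  obtain z3 where z3: "reach (Suc m) z2 z3" "z3 \<in> H (Suc m)" "low m z3 = low m z2"
      "\<forall>k \<in> D m z2. z3 $$ (Suc k, 0) = 0" "card (Bz m z3) \<le> 1"
    using stepB[OF z2(2) _ _ refl] z2 L1 N'(2) D2 by auto
  have D3: "D m z3 = D m z2" using D_low[OF z3(3)] .
  obtain z4 where z4: "reach (Suc m) z3 z4" "NF (Suc m) z4"
    using stepC[OF z3(2) _ _ z3(5)] z3 z2 L1 N'(2) D3 by auto
  have c1: "z1 \<in> carrier_mat (Suc m) (Suc m)" and c2: "z2 \<in> carrier_mat (Suc m) (Suc m)"
    using H1 z2(2) unfolding H_def by auto
  have "reach (Suc m) z z4"
    using reach_trans[OF zc r1 reach_trans[OF c1 z2(1) reach_trans[OF c2 z3(1) z4(1)]]] .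
  then show ?case using z4 by auto
qed

end

lemma even_inv:
  assumes "finite A" "\<And>x. x \<in> A \<Longrightarrow> f x \<in> A \<and> f (f x) = x \<and> f x \<noteq> x"
  shows "even (card A)"
  using assms
proof (induction "card A" arbitrary: A rule: less_induct)
  case less
  show ?case
  proof (cases "A = {}")
    case True then show ?thesis by simp
  next
    case False
    then obtain a where a: "a \<in> A" by auto
    have fa: "f a \<in> A" "f a \<noteq> a" "f (f a) = a" using less.prems(2)[OF a] by auto
    define A' where "A' = A - {a, f a}"
    have "card {a, f a} \<le> card A" using less.prems(1) a fa by (intro card_mono) auto
    then have c2: "2 \<le> card A" using fa by simp
    have "card A' = card A - card {a, f a}"
      using less.prems(1) a fa unfolding A'_def by (intro card_Diff_subset) auto
    then have cA: "card A = card A' + 2" using c2 fa by simp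
    have "\<And>x. x \<in> A' \<Longrightarrow> f x \<in> A' \<and> f (f x) = x \<and> f x \<noteq> x"
    proof -
      fix x assume x: "x \<in> A'"
      then have xA: "x \<in> A" "x \<noteq> a" "x \<noteq> f a" unfolding A'_def by auto
      have p: "f x \<in> A" "f (f x) = x" "f x \<noteq> x" using less.prems(2)[OF xA(1)] by auto
      have "f x \<noteq> a"
      proof
        assume "f x = a" then have "f (f x) = f a" by simp
        then show False using p xA by simp
      qed
      moreover have "f x \<noteq> f a"
      proof
        assume "f x = f a" then have "f (f x) = f (f a)" by simp
        then show False using p xA fa by simp
      qed
      ultimately show "f x \<in> A' \<and> f (f x) = x \<and> f x \<noteq> x" using p unfolding A'_def by auto
    qed
    moreover have "finite A'" using less.prems(1) unfolding A'_def by auto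
    ultimately have "even (card A')" using less.hyps[of A'] cA by auto
    then show ?thesis using cA by simp
  qed
qed

definition enm :: "nat set \<Rightarrow> nat \<Rightarrow> nat" where
  "enm J i = sorted_list_of_set J ! (i - 1)"

definition ix :: "nat set \<Rightarrow> nat \<Rightarrow> nat" where
  "ix J x = the_inv_into {1..card J} (enm J) x"

lemma enm_bij:
  assumes "finite J"
  shows "bij_betw (enm J) {1..card J} J"
proof -
  let ?xs = "sorted_list_of_set J"
  have b1: "bij_betw ((!) ?xs) {..<card J} J"
    by (rule bij_betw_nth) (use assms in simp_all)
  have b2: "bij_betw (\<lambda>i. i - 1) {1..card J} {..<card J}"
  proof (rule bij_betw_byWitness[where f'=Suc])
    show "\<forall>a\<in>{1..card J}. Suc (a - 1) = a" by auto
    show "\<forall>a\<in>{..<card J}. Suc a - 1 = a" by auto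
    show "(\<lambda>i. i - 1) ` {1..card J} \<subseteq> {..<card J}" by auto
    show "Suc ` {..<card J} \<subseteq> {1..card J}" by auto
  qed
  have "bij_betw ((!) ?xs \<circ> (\<lambda>i. i - 1)) {1..card J} J"
    by (rule bij_betw_trans[OF b2 b1])
  moreover have "(!) ?xs \<circ> (\<lambda>i. i - 1) = enm J" unfolding enm_def by (rule ext) simp
  ultimately show ?thesis by simp
qed

lemma enm_in: assumes "finite J" "i \<in> {1..card J}" shows "enm J i \<in> J"
  using bij_betwE[OF enm_bij[OF assms(1)]] assms(2) by blast

lemma ix_in: assumes "finite J" "x \<in> J" shows "ix J x \<in> {1..card J}"
  using bij_betwE[OF bij_betw_the_inv_into[OF enm_bij[OF assms(1)]]] assms(2) unfolding ix_def by blast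

lemma enm_ix: assumes "finite J" "x \<in> J" shows "enm J (ix J x) = x"
proof -
  have b: "bij_betw (enm J) {1..card J} J" using enm_bij[OF assms(1)] .
  have "inj_on (enm J) {1..card J}" "x \<in> enm J ` {1..card J}"
    using b assms(2) unfolding bij_betw_def by auto
  then show ?thesis unfolding ix_def by (rule f_the_inv_into_f)
qed

lemma ix_enm: assumes "finite J" "i \<in> {1..card J}" shows "ix J (enm J i) = i"
proof -
  have b: "bij_betw (enm J) {1..card J} J" using enm_bij[OF assms(1)] .
  have "inj_on (enm J) {1..card J}" using b unfolding bij_betw_def by auto
  then show ?thesis unfolding ix_def using assms(2) by (rule the_inv_into_f_f)
qed

lemma ix_inj: assumes "finite J" "x \<in> J" "y \<in> J" "ix J x = ix J y" shows "x = y"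
proof -
  have "x = enm J (ix J x)" using enm_ix[OF assms(1,2)] by simp
  also have "\<dots> = enm J (ix J y)" using assms(4) by simp
  also have "\<dots> = y" using enm_ix[OF assms(1,3)] .
  finally show ?thesis .
qed

definition gv :: "gval \<Rightarrow> nat \<Rightarrow> nat \<Rightarrow> 'a::ring_1" where
  "gv g i j = (case g of Idx k \<Rightarrow> if k = j then 1 else 0 | Pl \<Rightarrow> if i = j then 1 else 0
       | Mi \<Rightarrow> if i = j then -1 else 0)"

lemma Gamma_D:
  assumes "\<gamma> \<in> Gamma p q"
  shows "\<And>i. i \<in> {1..p+q} \<Longrightarrow> \<gamma> i \<in> Idx ` {1..p+q} \<union> {Pl, Mi}"
    and "\<And>i j. i \<in> {1..p+q} \<Longrightarrow> \<gamma> i = Idx j \<Longrightarrow> i \<noteq> j \<and> \<gamma> j = Idx i \<and> j \<in> {1..p+q}"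
    and "\<And>i. i \<notin> {1..p+q} \<Longrightarrow> \<gamma> i = undefined"
    and "int (card {i \<in> {1..p+q}. \<gamma> i = Pl}) - int (card {i \<in> {1..p+q}. \<gamma> i = Mi}) = int p - int q"
proof -
  note G = assms[unfolded Gamma_def mem_Collect_eq]
  note G1 = conjunct1[OF G] and G2 = conjunct1[OF conjunct2[OF G]] and G3 = conjunct2[OF conjunct2[OF G]]
  show A: "\<And>i. i \<in> {1..p+q} \<Longrightarrow> \<gamma> i \<in> Idx ` {1..p+q} \<union> {Pl, Mi}"
    using G1 by (rule PiE_mem)
  show "\<And>i j. i \<in> {1..p+q} \<Longrightarrow> \<gamma> i = Idx j \<Longrightarrow> i \<noteq> j \<and> \<gamma> j = Idx i \<and> j \<in> {1..p+q}"
  proof -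
    fix i j assume i: "i \<in> {1..p+q}" and g: "\<gamma> i = Idx j"
    have "i \<noteq> j \<and> \<gamma> j = Idx i" using bspec[OF G2 i] g by blast
    moreover have "j \<in> {1..p+q}" using A[OF i] g by auto
    ultimately show "i \<noteq> j \<and> \<gamma> j = Idx i \<and> j \<in> {1..p+q}" by blast
  qed
  show "\<And>i. i \<notin> {1..p+q} \<Longrightarrow> \<gamma> i = undefined"
    by (rule PiE_arb[OF G1])
  show "int (card {i \<in> {1..p+q}. \<gamma> i = Pl}) - int (card {i \<in> {1..p+q}. \<gamma> i = Mi}) = int p - int q"
    using G3 .
qed


lemma NFonI2:
  assumes "\<And>i j. i \<in> A \<Longrightarrow> j \<in> A \<Longrightarrow> N $$ (i,j) \<in> {0,1,-1}"
    "\<And>i j. i \<in> A \<Longrightarrow> j \<in> A \<Longrightarrow> N $$ (i,j) = N $$ (j,i)"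
    "\<And>i j. i \<in> A \<Longrightarrow> j \<in> A \<Longrightarrow> i \<noteq> j \<Longrightarrow> N $$ (i,j) \<noteq> -1"
    "\<And>i j k. i \<in> A \<Longrightarrow> j \<in> A \<Longrightarrow> k \<in> A \<Longrightarrow> N $$ (i,j) \<noteq> 0 \<Longrightarrow> N $$ (i,k) \<noteq> 0 \<Longrightarrow> j = k"
  shows "NFon A N"
  unfolding NFon_def using assms by blast

lemma gv_vals: "gv g i j \<in> {0, 1, -1}"
  unfolding gv_def by (cases g) auto

lemma gv_nz: "gv g i j \<noteq> 0 \<Longrightarrow> j = (case g of Idx k \<Rightarrow> k | _ \<Rightarrow> i)"
  unfolding gv_def by (cases g) (auto split: if_splits)

lemma gv_m1: "(1::'a::ring_1) \<noteq> -1 \<Longrightarrow> gv g i j = (-1::'a) \<Longrightarrow> i = j"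
  unfolding gv_def by (cases g) (auto split: if_splits)

lemma gv_sym:
  assumes g: "\<gamma> \<in> Gamma p q" and i: "i \<in> {1..p+q}" and j: "j \<in> {1..p+q}"
  shows "gv (\<gamma> i) i j = gv (\<gamma> j) j i"
proof -
  note G = Gamma_D[OF g]
  show ?thesis
  proof (cases "\<gamma> i")
    case (Idx k)
    have k: "k \<noteq> i" "\<gamma> k = Idx i" using G(2)[OF i Idx] by auto
    show ?thesis
    proof (cases "k = j")
      case True then show ?thesis using Idx k by (simp add: gv_def)
    next
      case False
      have "gv (\<gamma> j) j i = 0"
      proof (cases "\<gamma> j")
        case (Idx k')
        have "k' \<noteq> i"
        proof
          assume "k' = i"
          then have "\<gamma> i = Idx j" using G(2)[OF j Idx] by auto
          then show False using \<open>\<gamma> i = Idx k\<close> False by simp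
        qed
        then show ?thesis using Idx by (simp add: gv_def)
      next
        case Pl
        then have "j \<noteq> i" using \<open>\<gamma> i = Idx k\<close> by auto
        then show ?thesis using Pl by (simp add: gv_def)
      next
        case Mi
        then have "j \<noteq> i" using \<open>\<gamma> i = Idx k\<close> by auto
        then show ?thesis using Mi by (simp add: gv_def)
      qed
      then show ?thesis using Idx False by (simp add: gv_def)
    qed
  next
    case Pl
    show ?thesis
    proof (cases "i = j")
      case True then show ?thesis by simp
    next
      case False
      have "gv (\<gamma> j) j i = 0"
      proof (cases "\<gamma> j")
        case (Idx k')
        have "k' \<noteq> i" using G(2)[OF j Idx] Pl by auto
        then show ?thesis using Idx by (simp add: gv_def)
      qed (use False in \<open>auto simp: gv_def\<close>)
      then show ?thesis using Pl False by (simp add: gv_def)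
    qed
  next
    case Mi
    show ?thesis
    proof (cases "i = j")
      case True then show ?thesis by simp
    next
      case False
      have "gv (\<gamma> j) j i = 0"
      proof (cases "\<gamma> j")
        case (Idx k')
        have "k' \<noteq> i" using G(2)[OF j Idx] Mi by auto
        then show ?thesis using Idx by (simp add: gv_def)
      qed (use False in \<open>auto simp: gv_def\<close>)
      then show ?thesis using Mi False by (simp add: gv_def)
    qed
  qed
qed

definition Psi :: "nat \<Rightarrow> nat \<times> nat \<times> nat set \<times> (nat \<Rightarrow> gval) \<Rightarrow> 'a::ring_1 mat" where
  "Psi m x = (case x of (p, q, J, \<gamma>) \<Rightarrow> mat m m (\<lambda>(r,c). if Suc r \<in> J \<and> Suc c \<in> J then
      gv (\<gamma> (ix J (Suc r))) (ix J (Suc r)) (ix J (Suc c)) else 0))"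

lemma Psi_idx: "r < m \<Longrightarrow> c < m \<Longrightarrow> Psi m (p, q, J, \<gamma>) $$ (r,c) = (if Suc r \<in> J \<and> Suc c \<in> J then
      gv (\<gamma> (ix J (Suc r))) (ix J (Suc r)) (ix J (Suc c)) else 0)"
  unfolding Psi_def by simp

lemma Coprod_D:
  assumes "(p, q, J, \<gamma>) \<in> Coprod m"
  shows "p + q \<le> m" "J \<subseteq> {1..m}" "card J = p + q" "\<gamma> \<in> Gamma p q" "finite J"
  using assms unfolding Coprod_def by (auto intro: finite_subset)

lemma Psi_NF:
  assumes x: "(p, q, J, \<gamma>) \<in> Coprod m" and one: "(1::'a::ring_1) \<noteq> -1"
  shows "NF m (Psi m (p, q, J, \<gamma>) :: 'a mat)"
proof -
  note C = Coprod_D[OF x]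
  let ?N = "Psi m (p, q, J, \<gamma>) :: 'a mat"
  have ixJ: "\<And>y. y \<in> J \<Longrightarrow> ix J y \<in> {1..p+q}" using ix_in[OF C(5)] C(3) by auto
  have "NFon {..<m} ?N"
  proof (rule NFonI2)
    fix r c assume r: "r \<in> {..<m}" and c: "c \<in> {..<m}"
    have "gv (\<gamma> (ix J (Suc r))) (ix J (Suc r)) (ix J (Suc c)) \<in> {0,1,-1::'a}" by (rule gv_vals)
    then show "?N $$ (r,c) \<in> {0,1,-1}" using r c by (simp add: Psi_idx)
    show "?N $$ (r,c) = ?N $$ (c,r)" using r c gv_sym[where 'a='a, OF C(4) ixJ ixJ] by (simp add: Psi_idx)
    show "?N $$ (r,c) \<noteq> -1" if rc: "r \<noteq> c"
    proof
      assume h: "?N $$ (r,c) = -1"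
      then have J: "Suc r \<in> J" "Suc c \<in> J" using r c by (auto simp: Psi_idx split: if_splits)
      then have "ix J (Suc r) = ix J (Suc c)" using h r c gv_m1[OF one] by (simp add: Psi_idx)
      then show False using ix_inj[OF C(5) J] rc by simp
    qed
    fix k assume k: "k \<in> {..<m}" and nz: "?N $$ (r,c) \<noteq> 0" "?N $$ (r,k) \<noteq> 0"
    then have J: "Suc r \<in> J" "Suc c \<in> J" "Suc k \<in> J" using r c by (auto simp: Psi_idx split: if_splits)
    have "ix J (Suc c) = ix J (Suc k)" using nz r c k J gv_nz[where 'a='a] by (simp add: Psi_idx) metis
    then show "c = k" using ix_inj[OF C(5) J(2,3)] by simp
  qed
  then show ?thesis unfolding NF_def Psi_def by simp
qed


definition Jof :: "nat \<Rightarrow> 'a::ring_1 mat \<Rightarrow> nat set" where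
  "Jof m N = {x. x \<in> {1..m} \<and> (\<exists>c<m. N $$ (x - 1, c) \<noteq> 0)}"

definition dec :: "nat \<Rightarrow> 'a::ring_1 mat \<Rightarrow> nat set \<Rightarrow> nat \<Rightarrow> gval" where
  "dec m N J i = (let r = enm J i - 1 in if N $$ (r,r) = 1 then Pl else if N $$ (r,r) = -1 then Mi
     else Idx (ix J (Suc (SOME c. c < m \<and> N $$ (r,c) \<noteq> 0))))"

definition Phi :: "nat \<Rightarrow> 'a::ring_1 mat \<Rightarrow> nat \<times> nat \<times> nat set \<times> (nat \<Rightarrow> gval)" where
  "Phi m N = (let J = Jof m N; n = card J; \<gamma> = restrict (dec m N J) {1..n};
      P = card {i \<in> {1..n}. \<gamma> i = Pl}; M = card {i \<in> {1..n}. \<gamma> i = Mi}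
    in (P + (n - P - M) div 2, M + (n - P - M) div 2, J, \<gamma>))"

lemma Psi_rowJ:
  assumes x: "(p, q, J, \<gamma>) \<in> Coprod m" and r: "r < m" and one: "(1::'a::ring_1) \<noteq> -1"
  shows "(\<exists>c<m. (Psi m (p, q, J, \<gamma>) :: 'a mat) $$ (r,c) \<noteq> 0) \<longleftrightarrow> Suc r \<in> J"
proof
  assume "\<exists>c<m. (Psi m (p, q, J, \<gamma>) :: 'a mat) $$ (r,c) \<noteq> 0"
  then show "Suc r \<in> J" using r by (auto simp: Psi_idx split: if_splits)
next
  assume rJ: "Suc r \<in> J"
  note C = Coprod_D[OF x]
  define i where "i = ix J (Suc r)"
  have i: "i \<in> {1..p+q}" using ix_in[OF C(5) rJ] C(3) unfolding i_def by simp
  show "\<exists>c<m. (Psi m (p, q, J, \<gamma>) :: 'a mat) $$ (r,c) \<noteq> 0"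
  proof (cases "\<gamma> i")
    case (Idx k)
    have k: "k \<in> {1..p+q}" using Gamma_D(2)[OF C(4) i Idx] by auto
    have eJ: "enm J k \<in> J" using enm_in[OF C(5)] k C(3) by simp
    then have ek: "1 \<le> enm J k" "enm J k \<le> m" using C(2) by auto
    define c where "c = enm J k - 1"
    have c: "c < m" "Suc c = enm J k" using ek unfolding c_def by auto
    have "ix J (Suc c) = k" using c(2) ix_enm[OF C(5)] k C(3) by simp
    then have "(Psi m (p, q, J, \<gamma>) :: 'a mat) $$ (r,c) = 1"
      using r c rJ eJ Idx unfolding i_def by (simp add: Psi_idx gv_def)
    then show ?thesis using c by auto
  next
    case Pl
    then have "(Psi m (p, q, J, \<gamma>) :: 'a mat) $$ (r,r) = 1"
      using r rJ unfolding i_def by (simp add: Psi_idx gv_def)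
    then show ?thesis using r by auto
  next
    case Mi
    then have "(Psi m (p, q, J, \<gamma>) :: 'a mat) $$ (r,r) = -1"
      using r rJ unfolding i_def by (simp add: Psi_idx gv_def)
    then show ?thesis using r by auto
  qed
qed

lemma Jof_Psi:
  assumes x: "(p, q, J, \<gamma>) \<in> Coprod m" and one: "(1::'a::ring_1) \<noteq> -1"
  shows "Jof m (Psi m (p, q, J, \<gamma>) :: 'a mat) = J"
proof -
  note C = Coprod_D[OF x]
  have "y \<in> Jof m (Psi m (p, q, J, \<gamma>) :: 'a mat) \<longleftrightarrow> y \<in> J" for y
  proof (cases "y \<in> {1..m}")
    case True
    then obtain r where r: "y = Suc r" "r < m" by (cases y) auto
    show ?thesis using Psi_rowJ[OF x r(2) one] r unfolding Jof_def by auto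
  next
    case False
    then show ?thesis using C(2) unfolding Jof_def by auto
  qed
  then show ?thesis by blast
qed

lemma dec_Psi:
  assumes x: "(p, q, J, \<gamma>) \<in> Coprod m" and one: "(1::'a::ring_1) \<noteq> -1" and i: "i \<in> {1..p+q}"
  shows "dec m (Psi m (p, q, J, \<gamma>) :: 'a mat) J i = \<gamma> i"
proof -
  note C = Coprod_D[OF x]
  let ?N = "Psi m (p, q, J, \<gamma>) :: 'a mat"
  have eJ: "enm J i \<in> J" using enm_in[OF C(5)] i C(3) by simp
  then have ek: "1 \<le> enm J i" "enm J i \<le> m" using C(2) by auto
  define r where "r = enm J i - 1"
  have r: "r < m" "Suc r = enm J i" "Suc r \<in> J" using ek eJ unfolding r_def by auto
  have ixr: "ix J (Suc r) = i" using r(2) ix_enm[OF C(5)] i C(3) by simp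
  have Nrr: "?N $$ (r,r) = gv (\<gamma> i) i i" using r ixr by (simp add: Psi_idx)
  show ?thesis
  proof (cases "\<gamma> i")
    case (Idx k)
    have k: "k \<in> {1..p+q}" "k \<noteq> i" using Gamma_D(2)[OF C(4) i Idx] by auto
    have N0: "?N $$ (r,r) = 0" using Nrr Idx k by (simp add: gv_def)
    have eJk: "enm J k \<in> J" using enm_in[OF C(5)] k C(3) by simp
    then have ekk: "1 \<le> enm J k" "enm J k \<le> m" using C(2) by auto
    define c0 where "c0 = enm J k - 1"
    have c0: "c0 < m" "Suc c0 = enm J k" using ekk unfolding c0_def by auto
    have ixc0: "ix J (Suc c0) = k" using c0(2) ix_enm[OF C(5)] k C(3) by simp
    have "?N $$ (r,c0) = 1" using r c0 eJk ixr ixc0 Idx by (simp add: Psi_idx gv_def)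
    then have ex: "\<exists>c. c < m \<and> ?N $$ (r,c) \<noteq> 0" using c0 by auto
    define c where "c = (SOME c. c < m \<and> ?N $$ (r,c) \<noteq> 0)"
    have c: "c < m" "?N $$ (r,c) \<noteq> 0" using someI_ex[OF ex] unfolding c_def by auto
    then have cJ: "Suc c \<in> J" using r by (auto simp: Psi_idx split: if_splits)
    then have "gv (\<gamma> i) i (ix J (Suc c)) \<noteq> (0::'a)" using c r ixr by (simp add: Psi_idx)
    then have "ix J (Suc c) = k" using gv_nz Idx by fastforce
    then have "dec m ?N J i = Idx k"
      unfolding dec_def Let_def using N0 one r_def c_def by (simp add: r_def[symmetric] c_def[symmetric])
    then show ?thesis using Idx by simp
  next
    case Pl
    then show ?thesis using Nrr unfolding dec_def Let_def r_def by (simp add: gv_def)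
  next
    case Mi
    then have "?N $$ (r,r) = -1" using Nrr by (simp add: gv_def)
    then show ?thesis using Mi one unfolding dec_def Let_def r_def by (metis (no_types, lifting))
  qed
qed


lemma card_PM:
  "card {i \<in> {1..n}. g i = Pl} + card {i \<in> {1..n}. g i = Mi} \<le> (n::nat)"
proof -
  have "card {i \<in> {1..n}. g i = Pl} + card {i \<in> {1..n}. g i = Mi}
      = card ({i \<in> {1..n}. g i = Pl} \<union> {i \<in> {1..n}. g i = Mi})"
    by (rule card_Un_disjoint[symmetric]) auto
  also have "\<dots> \<le> card {1..n}" by (rule card_mono) auto
  finally show ?thesis by simp
qed

lemma Phi_Psi:
  assumes x: "(p, q, J, \<gamma>) \<in> Coprod m" and one: "(1::'a::ring_1) \<noteq> -1"
  shows "Phi m (Psi m (p, q, J, \<gamma>) :: 'a mat) = (p, q, J, \<gamma>)"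
proof -
  note C = Coprod_D[OF x]
  let ?N = "Psi m (p, q, J, \<gamma>) :: 'a mat"
  have J: "Jof m ?N = J" using Jof_Psi[OF x one] .
  have g: "restrict (dec m ?N J) {1..card J} = \<gamma>"
  proof (rule ext)
    fix i show "restrict (dec m ?N J) {1..card J} i = \<gamma> i"
      using dec_Psi[OF x one, of i] Gamma_D(3)[OF C(4), of i] C(3) by (auto simp: restrict_def)
  qed
  define P where "P = card {i \<in> {1..p+q}. \<gamma> i = Pl}"
  define M where "M = card {i \<in> {1..p+q}. \<gamma> i = Mi}"
  have cnt: "int P - int M = int p - int q" using Gamma_D(4)[OF C(4)] unfolding P_def M_def .
  have le: "P + M \<le> p + q" unfolding P_def M_def by (rule card_PM)
  have e1: "P + q = p + M" using cnt by linarith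
  have Mq: "M \<le> q" using e1 le by linarith
  have e2: "p + q - P - M = 2 * (q - M)" using e1 Mq le by linarith
  have eqs: "P + (p + q - P - M) div 2 = p" "M + (p + q - P - M) div 2 = q" using e1 Mq e2 by simp_all
  have "Phi m ?N = (P + (p + q - P - M) div 2, M + (p + q - P - M) div 2, J, \<gamma>)"
    unfolding Phi_def Let_def J g unfolding C(3) P_def M_def ..
  then show ?thesis using eqs by simp
qed

lemma NF_rowuniq: "NF m N \<Longrightarrow> r < m \<Longrightarrow> c < m \<Longrightarrow> c' < m \<Longrightarrow> N $$ (r,c) \<noteq> 0 \<Longrightarrow> N $$ (r,c') \<noteq> 0 \<Longrightarrow> c = c'"
  unfolding NF_def NFon_def by blast

lemma NF_offdiag: "NF m N \<Longrightarrow> r < m \<Longrightarrow> c < m \<Longrightarrow> r \<noteq> c \<Longrightarrow> N $$ (r,c) \<noteq> -1"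
  unfolding NF_def NFon_def by blast

lemma NF_some:
  assumes N: "NF m N" and rc: "r < m" "c < m" "N $$ (r,c) \<noteq> 0"
  shows "(SOME c'. c' < m \<and> N $$ (r,c') \<noteq> 0) = c"
proof -
  have ex: "\<exists>c'. c' < m \<and> N $$ (r,c') \<noteq> 0" using rc by auto
  have "(SOME c'. c' < m \<and> N $$ (r,c') \<noteq> 0) < m \<and> N $$ (r, SOME c'. c' < m \<and> N $$ (r,c') \<noteq> 0) \<noteq> 0"
    using someI_ex[OF ex] .
  then show ?thesis using NF_rowuniq[OF N rc(1) _ rc(2) _ rc(3)] by blast
qed

lemma Jof_iff: "r < m \<Longrightarrow> Suc r \<in> Jof m N \<longleftrightarrow> (\<exists>c<m. N $$ (r,c) \<noteq> 0)"
  unfolding Jof_def by auto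

lemma Jof_sub: "Jof m N \<subseteq> {1..m}" unfolding Jof_def by auto

lemma Jof_fin: "finite (Jof m N)" using Jof_sub finite_subset by blast

lemma dec_NF:
  assumes N: "NF m N" and one: "(1::'a::ring_1) \<noteq> -1" and rJ: "Suc r \<in> Jof m (N :: 'a mat)" and r: "r < m"
  defines "J \<equiv> Jof m N"
  shows "(N $$ (r,r) = 1 \<and> dec m N J (ix J (Suc r)) = Pl) \<or>
         (N $$ (r,r) = -1 \<and> dec m N J (ix J (Suc r)) = Mi) \<or>
         (\<exists>c<m. c \<noteq> r \<and> N $$ (r,c) = 1 \<and> N $$ (r,r) = 0 \<and> Suc c \<in> J \<and> dec m N J (ix J (Suc r)) = Idx (ix J (Suc c)))"
proof -
  have fin: "finite J" unfolding J_def by (rule Jof_fin)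
  have rJ': "Suc r \<in> J" using rJ unfolding J_def .
  have er: "enm J (ix J (Suc r)) - 1 = r" using enm_ix[OF fin rJ'] by simp
  have vals: "\<And>i j. i < m \<Longrightarrow> j < m \<Longrightarrow> N $$ (i,j) \<in> {0,1,-1}" using N unfolding NF_def NFon_def by blast
  have sym: "\<And>i j. i < m \<Longrightarrow> j < m \<Longrightarrow> N $$ (i,j) = N $$ (j,i)" using N unfolding NF_def NFon_def by blast
  show ?thesis
  proof (cases "N $$ (r,r) = 1")
    case True
    then show ?thesis unfolding dec_def Let_def er by simp
  next
    case F1: False
    show ?thesis
    proof (cases "N $$ (r,r) = -1")
      case True
      then show ?thesis using one unfolding dec_def Let_def er by simp
    next
      case False
      have r0: "N $$ (r,r) = 0" using vals[OF r r] F1 False by auto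
      obtain c where c: "c < m" "N $$ (r,c) \<noteq> 0" using rJ Jof_iff[OF r] by auto
      have cr: "c \<noteq> r" using c r0 by auto
      have c1: "N $$ (r,c) = 1" using vals[OF r c(1)] c(2) NF_offdiag[OF N r c(1)] cr by auto
      have cJ: "Suc c \<in> J" unfolding J_def using Jof_iff[OF c(1)] sym[OF r c(1)] c r by auto
      have "dec m N J (ix J (Suc r)) = Idx (ix J (Suc c))"
        unfolding dec_def Let_def er using F1 False NF_some[OF N r c(1) c(2)] by simp
      then show ?thesis using c cr c1 r0 cJ by blast
    qed
  qed
qed

lemma Psi_Phi:
  assumes N: "NF m (N :: 'a::ring_1 mat)" and one: "(1::'a) \<noteq> -1"
  shows "Psi m (Phi m N) = N"
proof -
  define J where "J = Jof m N"
  have fin: "finite J" unfolding J_def by (rule Jof_fin)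
  have Nc: "N \<in> carrier_mat m m" using N unfolding NF_def by auto
  have vals: "\<And>i j. i < m \<Longrightarrow> j < m \<Longrightarrow> N $$ (i,j) \<in> {0,1,-1}" using N unfolding NF_def NFon_def by blast
  have sym: "\<And>i j. i < m \<Longrightarrow> j < m \<Longrightarrow> N $$ (i,j) = N $$ (j,i)" using N unfolding NF_def NFon_def by blast
  obtain p q where PhiN: "Phi m N = (p, q, J, restrict (dec m N J) {1..card J})"
    unfolding Phi_def Let_def J_def by auto
  show ?thesis
  proof (rule eq_matI)
    fix r c assume "r < dim_row N" "c < dim_col N"
    then have r: "r < m" and c: "c < m" using Nc by auto
    show "Psi m (Phi m N) $$ (r,c) = N $$ (r,c)"
    proof (cases "Suc r \<in> J \<and> Suc c \<in> J")
      case False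
      have "N $$ (r,c) = 0"
      proof (cases "Suc r \<in> J")
        case True
        then have "Suc c \<notin> J" using False by auto
        then have "N $$ (c,r) = 0" using Jof_iff[OF c] r unfolding J_def by auto
        then show ?thesis using sym[OF r c] by simp
      next
        case False
        then show ?thesis using Jof_iff[OF r] c unfolding J_def by auto
      qed
      then show ?thesis using False r c unfolding PhiN by (auto simp: Psi_idx)
    next
      case True
      then have rJ: "Suc r \<in> J" and cJ: "Suc c \<in> J" by auto
      have ir: "ix J (Suc r) \<in> {1..card J}" using ix_in[OF fin rJ] .
      have "Psi m (Phi m N) $$ (r,c) = gv (dec m N J (ix J (Suc r))) (ix J (Suc r)) (ix J (Suc c))"
        using r c rJ cJ ir unfolding PhiN by (simp add: Psi_idx)
      also have "\<dots> = N $$ (r,c)"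
      proof -
        note D = dec_NF[OF N one rJ[unfolded J_def] r, folded J_def]
        have ixeq: "ix J (Suc r) = ix J (Suc c) \<longleftrightarrow> r = c" using ix_inj[OF fin rJ cJ] by auto
        show ?thesis
        proof (cases "N $$ (r,r) = 1")
          case True
          then have "dec m N J (ix J (Suc r)) = Pl" using D one by auto
          moreover have "r \<noteq> c \<Longrightarrow> N $$ (r,c) = 0" using NF_rowuniq[OF N r r c] True by auto
          ultimately show ?thesis using True ixeq by (auto simp: gv_def)
        next
          case F1: False
          show ?thesis
          proof (cases "N $$ (r,r) = -1")
            case True
            then have "dec m N J (ix J (Suc r)) = Mi" using D one by auto
            moreover have "r \<noteq> c \<Longrightarrow> N $$ (r,c) = 0" using NF_rowuniq[OF N r r c] True by auto
            ultimately show ?thesis using True ixeq by (auto simp: gv_def)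
          next
            case False
            then obtain c1 where c1: "c1 < m" "c1 \<noteq> r" "N $$ (r,c1) = 1" "Suc c1 \<in> J"
              "dec m N J (ix J (Suc r)) = Idx (ix J (Suc c1))" using D F1 by auto
            have e: "ix J (Suc c1) = ix J (Suc c) \<longleftrightarrow> c1 = c" using ix_inj[OF fin c1(4) cJ] by auto
            have "c1 \<noteq> c \<Longrightarrow> N $$ (r,c) = 0" using NF_rowuniq[OF N r c1(1) c] c1 by auto
            then show ?thesis using c1 e by (auto simp: gv_def)
          qed
        qed
      qed
      finally show ?thesis .
    qed
  qed (use Nc in \<open>auto simp: Psi_def PhiN\<close>)
qed


lemma Phi_in:
  assumes N: "NF m (N :: 'a::ring_1 mat)" and one: "(1::'a) \<noteq> -1"
  shows "Phi m N \<in> Coprod m"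
proof -
  define J where "J = Jof m N"
  define n where "n = card J"
  define \<gamma> where "\<gamma> = restrict (dec m N J) {1..n}"
  define P where "P = card {i \<in> {1..n}. \<gamma> i = Pl}"
  define M where "M = card {i \<in> {1..n}. \<gamma> i = Mi}"
  define I where "I = {i \<in> {1..n}. \<gamma> i \<noteq> Pl \<and> \<gamma> i \<noteq> Mi}"
  have PhiN: "Phi m N = (P + (n - P - M) div 2, M + (n - P - M) div 2, J, \<gamma>)"
    unfolding Phi_def Let_def J_def[symmetric] n_def[symmetric] \<gamma>_def[symmetric] P_def M_def ..
  have fin: "finite J" unfolding J_def by (rule Jof_fin)
  have Jsub: "J \<subseteq> {1..m}" unfolding J_def by (rule Jof_sub)
  have nm: "n \<le> m" unfolding n_def using card_mono[OF _ Jsub] by simp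
  have sym: "\<And>i j. i < m \<Longrightarrow> j < m \<Longrightarrow> N $$ (i,j) = N $$ (j,i)" using N unfolding NF_def NFon_def by blast
  have rowdata: "\<exists>r. r < m \<and> Suc r \<in> J \<and> ix J (Suc r) = i" if i: "i \<in> {1..n}" for i
  proof -
    have eJ: "enm J i \<in> J" using enm_in[OF fin] i unfolding n_def by simp
    then have "1 \<le> enm J i" "enm J i \<le> m" using Jsub by auto
    then show ?thesis using eJ ix_enm[OF fin] i unfolding n_def
      by (intro exI[of _ "enm J i - 1"]) auto
  qed
  have A: "\<gamma> i \<in> Idx ` {1..n} \<union> {Pl, Mi}" if i: "i \<in> {1..n}" for i
  proof -
    obtain r where r: "r < m" "Suc r \<in> J" "ix J (Suc r) = i" using rowdata[OF i] by auto
    note D = dec_NF[OF N one r(2)[unfolded J_def] r(1), folded J_def]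
    have "\<gamma> i = dec m N J (ix J (Suc r))" using i r unfolding \<gamma>_def by simp
    then show ?thesis using D ix_in[OF fin] unfolding n_def by auto
  qed
  have B: "i \<noteq> j \<and> \<gamma> j = Idx i" if i: "i \<in> {1..n}" and g: "\<gamma> i = Idx j" for i j
  proof -
    obtain r where r: "r < m" "Suc r \<in> J" "ix J (Suc r) = i" using rowdata[OF i] by auto
    note D = dec_NF[OF N one r(2)[unfolded J_def] r(1), folded J_def]
    have gi: "\<gamma> i = dec m N J (ix J (Suc r))" using i r unfolding \<gamma>_def by simp
    obtain c where c: "c < m" "c \<noteq> r" "N $$ (r,c) = 1" "Suc c \<in> J" "j = ix J (Suc c)"
      using D g gi by auto
    have ij: "i \<noteq> j" using ix_inj[OF fin r(2) c(4)] r(3) c(2,5) by auto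
    have j: "j \<in> {1..n}" using ix_in[OF fin c(4)] c(5) unfolding n_def by simp
    note D2 = dec_NF[OF N one c(4)[unfolded J_def] c(1), folded J_def]
    have cr: "N $$ (c,r) = 1" using sym[OF c(1) r(1)] c(3) by simp
    have cc: "N $$ (c,c) = 0" using NF_rowuniq[OF N c(1) c(1) r(1)] cr c(2) by auto
    obtain c' where c': "c' < m" "N $$ (c,c') = 1" "dec m N J (ix J (Suc c)) = Idx (ix J (Suc c'))"
      using D2 cc one by auto
    have "c' = r" using NF_rowuniq[OF N c(1) c'(1) r(1)] c' cr by auto
    then have "\<gamma> j = Idx i" using c' j c(5) r(3) unfolding \<gamma>_def by simp
    then show ?thesis using ij by simp
  qed
  define f where "f i = (case \<gamma> i of Idx k \<Rightarrow> k | _ \<Rightarrow> 0)" for i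
  have ev: "even (card I)"
  proof (rule even_inv[of I f])
    show "finite I" unfolding I_def by auto
    fix i assume iI: "i \<in> I"
    then have i: "i \<in> {1..n}" "\<gamma> i \<noteq> Pl" "\<gamma> i \<noteq> Mi" unfolding I_def by auto
    then obtain k where k: "\<gamma> i = Idx k" "k \<in> {1..n}" using A[OF i(1)] by auto
    have "i \<noteq> k \<and> \<gamma> k = Idx i" using B[OF i(1) k(1)] .
    then show "f i \<in> I \<and> f (f i) = i \<and> f i \<noteq> i" using k unfolding f_def I_def by auto
  qed
  have part: "n = P + M + card I"
  proof -
    have "card {1..n} = card ({i \<in> {1..n}. \<gamma> i = Pl} \<union> {i \<in> {1..n}. \<gamma> i = Mi} \<union> I)"
      unfolding I_def by (rule arg_cong[of _ _ card]) auto
    also have "\<dots> = card ({i \<in> {1..n}. \<gamma> i = Pl} \<union> {i \<in> {1..n}. \<gamma> i = Mi}) + card I"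
      unfolding I_def by (rule card_Un_disjoint) auto
    also have "card ({i \<in> {1..n}. \<gamma> i = Pl} \<union> {i \<in> {1..n}. \<gamma> i = Mi}) = P + M"
      unfolding P_def M_def by (rule card_Un_disjoint) auto
    finally show ?thesis by simp
  qed
  define p where "p = P + (n - P - M) div 2"
  define q where "q = M + (n - P - M) div 2"
  have nI: "n - P - M = card I" using part by simp
  have I2: "2 * (card I div 2) = card I" using ev by simp
  have pq1: "p + q = n" unfolding p_def q_def nI using part I2 by simp
  have pq2: "int p - int q = int P - int M" unfolding p_def q_def by simp
  have G1: "\<gamma> \<in> {1..p+q} \<rightarrow>\<^sub>E Idx ` {1..p+q} \<union> {Pl, Mi}"
  proof -
    have "\<forall>i \<in> {1..n}. dec m N J i \<in> Idx ` {1..n} \<union> {Pl, Mi}"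
    proof
      fix i assume i: "i \<in> {1..n}"
      from A[OF i] show "dec m N J i \<in> Idx ` {1..n} \<union> {Pl, Mi}" using i by (simp add: \<gamma>_def)
    qed
    then show ?thesis unfolding pq1 \<gamma>_def by (simp only: restrict_PiE_iff)
  qed
  have G2: "\<forall>i \<in> {1..p+q}. \<forall>j. \<gamma> i = Idx j \<longrightarrow> i \<noteq> j \<and> \<gamma> j = Idx i"
    unfolding pq1 using B by blast
  have G3: "int (card {i \<in> {1..p+q}. \<gamma> i = Pl}) - int (card {i \<in> {1..p+q}. \<gamma> i = Mi}) = int p - int q"
    unfolding pq1 pq2 P_def M_def ..
  have G: "\<gamma> \<in> Gamma p q"
    unfolding Gamma_def mem_Collect_eq using G1 G2 G3 by (intro conjI)
  have "p + q \<le> m \<and> J \<subseteq> {1..m} \<and> card J = p + q \<and> \<gamma> \<in> Gamma p q"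
    using G pq1 nm Jsub unfolding n_def by (intro conjI) simp_all
  then show ?thesis unfolding PhiN p_def[symmetric] q_def[symmetric] Coprod_def
    by (simp only: mem_Collect_eq prod.case)
qed

lemma Coprod_bij:
  assumes one: "(1::'a::ring_1) \<noteq> -1"
  shows "bij_betw (Psi m) (Coprod m) {N :: 'a mat. NF m N}"
proof (rule bij_betw_byWitness[where f' = "Phi m"])
  show "\<forall>x\<in>Coprod m. Phi m (Psi m x :: 'a mat) = x"
    using Phi_Psi[OF _ one] by auto
  show "\<forall>N\<in>{N :: 'a mat. NF m N}. Psi m (Phi m N) = N"
    using Psi_Phi[OF _ one] by auto
  show "Psi m ` Coprod m \<subseteq> {N :: 'a mat. NF m N}"
    using Psi_NF[OF _ one] by auto
  show "Phi m ` {N :: 'a mat. NF m N} \<subseteq> Coprod m"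
    using Phi_in[OF _ one] by auto
qed


context cjf
begin

lemma quot_bij: "bij_betw (\<lambda>n. rel m `` {n}) {n. NF m n} (H m // rel m)"
proof -
  have E: "equiv (H m) (rel m)" by (rule rel_equiv)
  have inj: "inj_on (\<lambda>n. rel m `` {n}) {n. NF m n}"
  proof (rule inj_onI)
    fix n1 n2 assume n1: "n1 \<in> {n. NF m n}" and n2: "n2 \<in> {n. NF m n}"
      and eq: "rel m `` {n1} = rel m `` {n2}"
    have h2: "n2 \<in> H m" using n2 NF_H by auto
    have "(n1, n2) \<in> rel m" using eq_equiv_class[OF eq E h2] .
    then obtain b where "UTD m b" "n2 = b * n1 * adj b" unfolding rel_def by auto
    then show "n1 = n2" using NF_unique n1 n2 by auto
  qed
  have img: "(\<lambda>n. rel m `` {n}) ` {n. NF m n} = H m // rel m"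
  proof
    show "(\<lambda>n. rel m `` {n}) ` {n. NF m n} \<subseteq> H m // rel m"
      using NF_H by (auto intro: quotientI)
  next
    show "H m // rel m \<subseteq> (\<lambda>n. rel m `` {n}) ` {n. NF m n}"
    proof
      fix X assume "X \<in> H m // rel m"
      then obtain z where z: "X = rel m `` {z}" "z \<in> H m" by (auto elim: quotientE)
      obtain N where N: "reach m z N" "NF m N" using NF_exists[OF z(2)] by auto
      have "(z, N) \<in> rel m" using N z(2) NF_H unfolding reach_def rel_def by auto
      then have "rel m `` {z} = rel m `` {N}" using equiv_class_eq[OF E] by auto
      then show "X \<in> (\<lambda>n. rel m `` {n}) ` {n. NF m n}" using z N by auto
    qed
  qed
  show ?thesis unfolding bij_betw_def using inj img by auto
qed

lemma main_generic: "\<exists>g. bij_betw g (H m // rel m) (Coprod m)"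
proof -
  have b1: "bij_betw (Psi m) (Coprod m) {N :: 'a mat. NF m N}" by (rule Coprod_bij[OF one_neq_m1])
  have "bij_betw ((\<lambda>n. rel m `` {n}) \<circ> Psi m) (Coprod m) (H m // rel m)"
    by (rule bij_betw_trans[OF b1 quot_bij])
  then show ?thesis by (rule bij_betw_inv)
qed

end

interpretation Cx: cjf cnj
proof
  fix x y :: complex
  show "cnj (x + y) = cnj x + cnj y" by simp
  show "cnj (x * y) = cnj x * cnj y" by simp
  show "cnj 1 = 1" by simp
  show "cnj (cnj x) = x" by simp
  show "(2::complex) \<noteq> 0" by simp
  show "x * cnj x \<noteq> -1"
  proof
    assume "x * cnj x = -1"
    then have "Re (x * cnj x) = -1" by simp
    moreover have "Re (x * cnj x) \<ge> 0" unfolding complex_mult_cnj by simp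
    ultimately show False by simp
  qed
next
  fix a :: complex
  assume ca: "cnj a = a" and a0: "a \<noteq> 0"
  have "Im (cnj a) = Im a" using ca by simp
  then have "Im a = 0" by simp
  then have ar: "a = complex_of_real (Re a)" by (simp add: complex_eq_iff)
  define r where "r = Re a"
  have r0: "r \<noteq> 0" using a0 ar unfolding r_def by auto
  define t where "t = 1 / sqrt \<bar>r\<bar>"
  have ss: "sqrt \<bar>r\<bar> * sqrt \<bar>r\<bar> = \<bar>r\<bar>" by simp
  have sp: "sqrt \<bar>r\<bar> \<noteq> 0" using r0 by simp
  have tt: "t * t * r = r / \<bar>r\<bar>" unfolding t_def using ss sp by (simp add: field_simps)
  define x where "x = complex_of_real t"
  have "x * cnj x * a = complex_of_real (t * t * r)"
    unfolding x_def r_def using ar by (simp add: complex_cnj_complex_of_real)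
  then have e: "x * cnj x * a = complex_of_real (r / \<bar>r\<bar>)" using tt by simp
  have "r / \<bar>r\<bar> = 1 \<or> r / \<bar>r\<bar> = -1" using r0 by (cases "r > 0") auto
  then show "\<exists>x. x * cnj x * a = 1 \<or> x * cnj x * a = -1"
  proof (elim disjE)
    assume h: "r / \<bar>r\<bar> = 1"
    have "x * cnj x * a = 1" using e unfolding h by simp
    then show ?thesis by blast
  next
    assume h: "r / \<bar>r\<bar> = -1"
    have "x * cnj x * a = -1" using e unfolding h by simp
    then show ?thesis by blast
  qed
qed

interpretation Rx: cjf "\<lambda>x::real. x"
proof
  fix x :: real
  show "x * x \<noteq> -1" using zero_le_square[of x] by linarith
  show "(2::real) \<noteq> 0" by simp
next
  fix a :: real
  assume a0: "a \<noteq> 0"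
  define x where "x = 1 / sqrt \<bar>a\<bar>"
  have "x * x * a = a / \<bar>a\<bar>" unfolding x_def using a0 by (simp add: field_simps)
  moreover have "a / \<bar>a\<bar> = 1 \<or> a / \<bar>a\<bar> = -1" using a0 by (cases "a > 0") auto
  ultimately show "\<exists>x. x * x * a = 1 \<or> x * x * a = -1" by metis
qed auto

lemma adj_C: "adj_mat = Cx.adj"
  by (rule ext) (simp add: adj_mat_def Cx.adj_def)

lemma adj_R: "transpose_mat = Rx.adj"
  by (rule ext) (simp add: transpose_mat_def Rx.adj_def)

lemma Her_C: "Her m = Cx.H m"
  unfolding Her_def Cx.H_def adj_C ..

lemma Sym_R: "Sym m = Rx.H m"
  unfolding Sym_def Rx.H_def adj_R ..

lemma orbit_C: "orbit_rel_C m = Cx.rel m"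
  unfolding orbit_rel_C_def Cx.rel_def Her_C adj_C by (simp add: Bex_def Borel_UTD)

lemma orbit_R: "orbit_rel_R m = Rx.rel m"
  unfolding orbit_rel_R_def Rx.rel_def Sym_R adj_R by (simp add: Bex_def Borel_UTD)

theorem corollary8p24:
  fixes m :: nat
  shows "(\<exists>f. bij_betw f (Her m // orbit_rel_C m) (Sym m // orbit_rel_R m)) \<and>
         (\<exists>g. bij_betw g (Sym m // orbit_rel_R m) (Coprod m))"
proof -
  obtain g1 where g1: "bij_betw g1 (Her m // orbit_rel_C m) (Coprod m)"
    using Cx.main_generic[of m] unfolding Her_C orbit_C by blast
  obtain g2 where g2: "bij_betw g2 (Sym m // orbit_rel_R m) (Coprod m)"
    using Rx.main_generic[of m] unfolding Sym_R orbit_R by blast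
  obtain h2 where h2: "bij_betw h2 (Coprod m) (Sym m // orbit_rel_R m)"
    using bij_betw_inv[OF g2] by blast
  have "bij_betw (h2 \<circ> g1) (Her m // orbit_rel_C m) (Sym m // orbit_rel_R m)"
    using bij_betw_trans[OF g1 h2] .
  then show ?thesis using g2 by blast
qed

end
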